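(* Let $h=h(u,v)$ be smooth with $h_{uu}h_{vv}>0$, and consider the hyperbolic system $u_t=h_{uv}u_x+h_{vv}v_x$, $v_t=h_{uu}u_x+h_{uv}v_x$, written in Riemann invariants $r=(r_+,r_-)$ as $$\partial_t r_+=\lambda_+(r)\partial_x r_+,\qquad \partial_t r_-=\lambda_-(r)\partial_x r_-,\qquad \lambda_\pm=h_{uv}\pm\sqrt{h_{uu}h_{vv}}.$$ Let $r_\pm(x,t)$ be a generic solution (in the sense of the context) given for $t<t_0$ by the hodograph equations $x+\lambda_\pm(r)t=\mu_\pm(r)$, having a generic gradient catastrophe of $r_-$ at $(x_0,t_0)$ with limiting values $r^0_\pm$. Put $x_\pm=x-x_0+\lambda^0_\pm(t-t_0)$ and let $\bar r_\pm(x_+,x_-)=r_\pm-r^0_\pm$, regarded as functions of $(x_+,x_-)$. Then, for sufficiently small $|X_\pm|$ satisfying $\frac{X_+-X_-}{\lambda^0_+-\lambda^0_-}<0$, the limits $$R_+(X_+,X_-)=\lim_{k\to0}k^{-2/3}\bar r_+(k^{2/3}X_+,kX_-),\qquad R_-(X_+,X_-)=\lim_{k\to0}k^{-1/3}\bar r_-(k^{2/3}X_+,kX_-)$$ exist and satisfy $$X_+=\alpha R_+,\qquad X_-=\beta X_+R_--\tfrac16\gamma R_-^3,$$ where $$\alpha=\mu^0_{+,+}-t_0\lambda^0_{+,+},\qquad \beta=-\frac{\lambda^0_{-,-}}{\lambda^0_+-\lambda^0_-},\qquad \gamma=-\mu^0_{-,---}+t_0\lambda^0_{-,---}.$$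
   Context: Riemann invariants: $r_\pm=r_\pm(u,v)$ with $dr_\pm=\kappa_\pm(\pm\sqrt{h_{uu}}\,du+\sqrt{h_{vv}}\,dv)$ for nonvanishing integrating factors $\kappa_\pm$. Notation: for a function $g(r_+,r_-)$, $g_{\pm,\dots}$ denotes partial derivatives with respect to the Riemann invariants after the comma, e.g. $\lambda_{-,--}=\partial^2\lambda_-/\partial r_-^2$, $\mu_{+,+}=\partial\mu_+/\partial r_+$; a superscript $0$ means evaluation at $r^0=(r^0_+,r^0_-)$, the value of the solution at $(x_0,t_0)$, and $\lambda^0_\pm=\lambda_\pm(r^0)$. Hodograph form: the solution satisfies $x+\lambda_\pm(r)t=\mu_\pm(r)$, where $\mu_\pm$ satisfy $\frac{\partial\mu_+}{\partial r_-}=\frac{\mu_+-\mu_-}{\lambda_+-\lambda_-}\frac{\partial\lambda_+}{\partial r_-}$, $\frac{\partial\mu_-}{\partial r_+}=\frac{\mu_+-\mu_-}{\lambda_+-\lambda_-}\frac{\partial\lambda_-}{\partial r_+}$. Gradient catastrophe of $r_-$ at $(x_0,t_0)$: $\partial_xr_-\to\infty$ while $\partial_xr_+$ stays bounded as $(x,t)\to(x_0,t_0)$; it is characterized by $\mu^0_{-,-}-t_0\lambda^0_{-,-}=0$ and $\mu^0_{-,--}-t_0\lambda^0_{-,--}=0$. Genericity: $\lambda^0_{-,-}\neq0$, the graph of $r_-(x,t_0)$ has a nondegenerate inflection point at $x_0$, and $\mu^0_{+,+}-t_0\lambda^0_{+,+}\neq0$, $\mu^0_{-,---}-t_0\lambda^0_{-,---}\neq0$.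 *)

theory Defs
  imports "HOL-Analysis.Analysis"
begin

text \<open>Functions of two real variables are written curried: f :: real \<Rightarrow> real \<Rightarrow> real.
  For functions of the Riemann invariants, the first argument is r_+ and the second r_-.\<close>

definition pd1 :: "(real \<Rightarrow> real \<Rightarrow> real) \<Rightarrow> real \<Rightarrow> real \<Rightarrow> real" where
  "pd1 f a b = deriv (\<lambda>x. f x b) a"

definition pd2 :: "(real \<Rightarrow> real \<Rightarrow> real) \<Rightarrow> real \<Rightarrow> real \<Rightarrow> real" where
  "pd2 f a b = deriv (\<lambda>y. f a y) b"

fun pds :: "bool list \<Rightarrow> (real \<Rightarrow> real \<Rightarrow> real) \<Rightarrow> real \<Rightarrow> real \<Rightarrow> real" where
  "pds [] f = f"
| "pds (d # ds) f = (if d then pd2 else pd1) (pds ds f)"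

definition smooth_on :: "(real \<times> real) set \<Rightarrow> (real \<Rightarrow> real \<Rightarrow> real) \<Rightarrow> bool" where
  "smooth_on S f \<longleftrightarrow>
     (\<forall>ds. continuous_on S (\<lambda>p. pds ds f (fst p) (snd p)) \<and>
       (\<forall>p\<in>S. (\<lambda>x. pds ds f x (snd p)) differentiable (at (fst p)) \<and>
               (\<lambda>y. pds ds f (fst p) y) differentiable (at (snd p))))"

text \<open>Passing from the characteristic coordinates (x_+, x_-) back to (x,t):
  x_\<pm> = x - x0 + lam0\<pm> (t - t0).\<close>
definition t_of :: "real \<Rightarrow> real \<Rightarrow> real \<Rightarrow> real \<Rightarrow> real \<Rightarrow> real" where
  "t_of lp0 lm0 t0 xp xm = t0 + (xp - xm) / (lp0 - lm0)"

definition x_of :: "real \<Rightarrow> real \<Rightarrow> real \<Rightarrow> real \<Rightarrow> real \<Rightarrow> real \<Rightarrow> real" where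
  "x_of lp0 lm0 x0 t0 xp xm = x0 + xp - lp0 * (t_of lp0 lm0 t0 xp xm - t0)"

end

theory Submission
  imports Defs "HOL-Homology.Invariance_of_Domain" "HOL-Computational_Algebra.Polynomial"
begin



lemma ev_small:
  fixes f :: "real \<Rightarrow> real"
  assumes "(f \<longlongrightarrow> 0) F" "e > 0"
  shows "eventually (\<lambda>x. \<bar>f x\<bar> < e) F"
  using tendstoD[OF assms] by (simp add: dist_real_def)

lemma ev_tau:
  assumes "(e::real) > 0"
  shows "eventually (\<lambda>\<tau>. 0 < \<tau> \<and> \<tau> < e) (at_right 0)"
  unfolding eventually_at_right_field using assms by auto

lemma sq_le: "0 \<le> (x::real) \<Longrightarrow> x < m \<Longrightarrow> m \<le> 1 \<Longrightarrow> x^2 \<le> m"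
proof -
  assume "0 \<le> x" "x < m" "m \<le> 1"
  then have "x*x \<le> m*1" by (intro mult_mono) auto
  then show ?thesis by (simp add: power2_eq_square)
qed

lemma stepA:
  fixes a b :: "real \<Rightarrow> real"
  assumes \<alpha>: "\<alpha> \<noteq> 0" and K: "K \<ge> 0"
    and a0: "(a \<longlongrightarrow> 0) (at_right 0)" and b0: "(b \<longlongrightarrow> 0) (at_right 0)"
    and H: "eventually (\<lambda>\<tau>. \<bar>\<tau>^2*Xp - \<alpha>*a \<tau>\<bar> \<le> K*(\<bar>a \<tau>\<bar>*\<bar>b \<tau>\<bar> + \<bar>b \<tau>\<bar>^3 + (a \<tau>)^2 + \<bar>a \<tau>\<bar>*(b \<tau>)^2 + \<tau>^2*(\<bar>a \<tau>\<bar>+\<bar>b \<tau>\<bar>))) (at_right 0)"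
  shows "\<exists>C\<ge>0. eventually (\<lambda>\<tau>. \<bar>a \<tau>\<bar> \<le> C*(\<tau>^2 + \<bar>b \<tau>\<bar>^3)) (at_right 0)"
proof -
  define e where "e = \<bar>\<alpha>\<bar>/(8*(K+1))"
  have e: "e > 0" using \<alpha> K by (simp add: e_def)
  have e1: "e \<le> 1 \<or> True" by simp
  have Ke: "4*K*e \<le> \<bar>\<alpha>\<bar>/2"
  proof -
    have "4*K*e = \<bar>\<alpha>\<bar>/2 * (K/(K+1))" using K by (simp add: e_def field_simps)
    also have "\<dots> \<le> \<bar>\<alpha>\<bar>/2 * 1" using K by (intro mult_left_mono) auto
    finally show ?thesis by simp
  qed
  define m where "m = min e 1"
  have m: "m > 0" "m \<le> e" "m \<le> 1" using e by (auto simp: m_def)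
  have ev: "eventually (\<lambda>\<tau>. \<bar>a \<tau>\<bar> < m \<and> \<bar>b \<tau>\<bar> < m \<and> 0 < \<tau> \<and> \<tau> < m) (at_right 0)"
    using ev_small[OF a0 m(1)] ev_small[OF b0 m(1)] ev_tau[OF m(1)] by eventually_elim auto
  show ?thesis
  proof (intro exI[of _ "2*(\<bar>Xp\<bar>+K)/\<bar>\<alpha>\<bar>"] conjI, use K in simp, use ev H in eventually_elim)
    case (elim \<tau>)
    define A where "A = \<bar>a \<tau>\<bar>"
    define B where "B = \<bar>b \<tau>\<bar>"
    have A: "0 \<le> A" "A < m" and B: "0 \<le> B" "B < m" using elim by (auto simp: A_def B_def)
    have t: "0 < \<tau>" "\<tau> < m" using elim by auto
    have t2: "\<tau>^2 \<le> m" using t m sq_le[of \<tau> m] by simp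
    have B2: "B^2 \<le> m" using B m sq_le[of B m] by simp
    have sumle: "B + A + B^2 + \<tau>^2 \<le> 4*e" using A B t2 B2 m by linarith
    have "K*(A*B + A^2 + A*B^2 + \<tau>^2*A) = K*A*(B + A + B^2 + \<tau>^2)"
      by (simp add: algebra_simps power2_eq_square)
    also have "\<dots> \<le> K*A*(4*e)" using sumle K A by (intro mult_left_mono) auto
    also have "\<dots> = A*(4*K*e)" by simp
    also have "\<dots> \<le> A*(\<bar>\<alpha>\<bar>/2)" using Ke A by (intro mult_left_mono) auto
    finally have k1: "K*(A*B + A^2 + A*B^2 + \<tau>^2*A) \<le> A*(\<bar>\<alpha>\<bar>/2)" .
    have tB: "\<tau>^2*B \<le> \<tau>^2" using B m by (intro mult_left_le) auto
    have H': "\<bar>\<tau>^2*Xp - \<alpha>*a \<tau>\<bar> \<le> K*(A*B + A^2 + A*B^2 + \<tau>^2*A) + K*(B^3 + \<tau>^2*B)"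
      using elim by (simp add: A_def B_def algebra_simps power2_abs)
    have "\<bar>\<alpha>\<bar>*A \<le> \<bar>\<tau>^2*Xp\<bar> + \<bar>\<tau>^2*Xp - \<alpha>*a \<tau>\<bar>"
      by (simp add: A_def abs_mult[symmetric]) 
    also have "\<bar>\<tau>^2*Xp\<bar> = \<tau>^2*\<bar>Xp\<bar>" by (simp add: abs_mult)
    finally have "\<bar>\<alpha>\<bar>*A \<le> \<tau>^2*\<bar>Xp\<bar> + A*(\<bar>\<alpha>\<bar>/2) + K*(B^3 + \<tau>^2)"
      using H' k1 tB K by (smt (verit) mult_left_mono)
    moreover have "A*(\<bar>\<alpha>\<bar>/2) = (\<bar>\<alpha>\<bar>*A)/2" by simp
    ultimately have "\<bar>\<alpha>\<bar>*A \<le> 2*(\<tau>^2*\<bar>Xp\<bar>) + 2*(K*(B^3 + \<tau>^2))" by linarith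
    also have "\<dots> \<le> 2*(\<bar>Xp\<bar>+K)*(\<tau>^2 + B^3)"
      using K B t by (simp add: algebra_simps mult_nonneg_nonneg)
    finally have "\<bar>\<alpha>\<bar>*A \<le> 2*(\<bar>Xp\<bar>+K)*(\<tau>^2 + B^3)" .
    then show ?case using \<alpha> by (simp add: A_def B_def field_simps)
  qed
qed

lemma stepB:
  fixes a b \<sigma> :: "real \<Rightarrow> real"
  assumes \<gamma>: "\<gamma> \<noteq> 0" and K: "K \<ge> 0" and C: "C \<ge> 0" and S: "S \<ge> 0"
    and b0: "(b \<longlongrightarrow> 0) (at_right 0)"
    and HA: "eventually (\<lambda>\<tau>. \<bar>a \<tau>\<bar> \<le> C*(\<tau>^2 + \<bar>b \<tau>\<bar>^3)) (at_right 0)"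
    and Hm: "\<And>\<epsilon>. \<epsilon> > 0 \<Longrightarrow> eventually (\<lambda>\<tau>. \<bar>\<tau>^3*Xm - (-\<gamma>/6*(b \<tau>)^3 - c*b \<tau>*\<tau>^2*\<sigma> \<tau>)\<bar>
              \<le> \<epsilon>*\<bar>b \<tau>\<bar>^3 + K*((a \<tau>)^2 + \<bar>a \<tau>\<bar>*(b \<tau>)^2 + \<tau>^2*(\<bar>a \<tau>\<bar> + (b \<tau>)^2))) (at_right 0)"
    and Hs: "eventually (\<lambda>\<tau>. \<bar>\<sigma> \<tau>\<bar> \<le> S) (at_right 0)"
  shows "\<exists>N\<ge>1. eventually (\<lambda>\<tau>. \<bar>b \<tau>\<bar> \<le> N*\<tau>) (at_right 0)"
proof -
  define g where "g = \<bar>\<gamma>\<bar>/6"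
  have g: "g > 0" using \<gamma> by (simp add: g_def)
  define Q where "Q = 4*C^2 + 4*C + 1"
  have Q: "Q \<ge> 1" using C by (simp add: Q_def)
  define N where "N = max 1 (4*(\<bar>Xm\<bar> + \<bar>c\<bar>*S)/g)"
  have N: "N \<ge> 1" "4*(\<bar>Xm\<bar> + \<bar>c\<bar>*S)/g \<le> N" by (auto simp: N_def)
  have N2: "(\<bar>Xm\<bar> + \<bar>c\<bar>*S)/N \<le> g/4"
    using N g by (simp add: field_simps)
  define d where "d = min 1 (g/(4*(K*Q+1)))"
  have d: "d > 0" "d \<le> 1" "K*Q*d \<le> g/4"
  proof -
    have "K*Q \<ge> 0" using K Q by simp
    then show "d > 0" "d \<le> 1" using g by (auto simp: d_def)
    have "K*Q*d \<le> K*Q*(g/(4*(K*Q+1)))" using K Q by (intro mult_left_mono) (auto simp: d_def)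
    also have "\<dots> = g/4 * (K*Q/(K*Q+1))" using K Q by (simp add: field_simps)
    also have "\<dots> \<le> g/4 * 1" using \<open>K*Q \<ge> 0\<close> g by (intro mult_left_mono) (auto simp: divide_le_eq_1)
    finally show "K*Q*d \<le> g/4" by simp
  qed
  have ev: "eventually (\<lambda>\<tau>. \<bar>b \<tau>\<bar> < d \<and> 0 < \<tau>) (at_right 0)"
    using ev_small[OF b0 d(1)] ev_tau[OF zero_less_one] by eventually_elim auto
  have g4: "g/4 > 0" using g by simp
  show ?thesis
  proof (intro exI[of _ N] conjI N(1), use ev HA Hm[OF g4] Hs in eventually_elim)
    case (elim \<tau>)
    define B where "B = \<bar>b \<tau>\<bar>"
    define A where "A = \<bar>a \<tau>\<bar>"
    have t: "0 < \<tau>" using elim by auto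
    show ?case
    proof (rule ccontr)
      assume "\<not> \<bar>b \<tau>\<bar> \<le> N * \<tau>"
      then have NB: "N*\<tau> < B" by (simp add: B_def)
      have Nt: "N*\<tau> > 0" using N t by simp
      have B: "0 < B" "B < d" "B \<le> 1" using NB Nt elim d by (auto simp: B_def)
      have tB: "\<tau> \<le> B" using NB N t by (smt (verit) mult_le_cancel_right1)
      have tBN: "\<tau> \<le> B/N" using NB N by (simp add: field_simps)
      have t2: "\<tau>^2 \<le> B^2" using tB t by (intro power_mono) auto
      have t2N: "\<tau>^2 \<le> B^2/N" 
      proof -
        have "\<tau>^2 = \<tau>*\<tau>" by (simp add: power2_eq_square)
        also have "\<dots> \<le> (B/N)*B" using tBN tB t by (intro mult_mono) auto
        finally show ?thesis by (simp add: power2_eq_square)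
      qed
      have t3N: "\<tau>^3 \<le> B^3/N"
      proof -
        have "\<tau>^3 = \<tau>*\<tau>^2" by (simp add: power3_eq_cube power2_eq_square)
        also have "\<dots> \<le> B*(B^2/N)" using tB t2N t by (intro mult_mono) auto
        finally show ?thesis by (simp add: power3_eq_cube power2_eq_square)
      qed
      have B3: "B^3 \<le> B^2" using B by (simp add: power3_eq_cube power2_eq_square mult_left_le)
      have A: "A \<le> 2*C*B^2"
      proof -
        have "A \<le> C*(\<tau>^2 + B^3)" using elim by (simp add: A_def B_def)
        also have "\<dots> \<le> C*(B^2+B^2)" using C t2 B3 by (intro mult_left_mono) auto
        finally show ?thesis by simp
      qed
      have A0: "0 \<le> A" by (simp add: A_def)
      have e1: "(a \<tau>)^2 \<le> 4*C^2*B^4"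
      proof -
        have "(a \<tau>)^2 = A^2" by (simp add: A_def)
        also have "\<dots> \<le> (2*C*B^2)^2" using A A0 by (intro power_mono) auto
        finally show ?thesis by (simp add: power_mult_distrib)
      qed
      have e2: "A*(b \<tau>)^2 \<le> 2*C*B^4"
      proof -
        have "A*(b \<tau>)^2 = A*B^2" by (simp add: B_def)
        also have "\<dots> \<le> (2*C*B^2)*B^2" using A by (intro mult_right_mono) auto
        finally show ?thesis by (simp add: power2_eq_square power4_eq_xxxx mult_ac)
      qed
      have e3: "\<tau>^2*A \<le> 2*C*B^4"
      proof -
        have "\<tau>^2*A \<le> B^2*(2*C*B^2)" using A t2 A0 by (intro mult_mono) auto
        then show ?thesis by (simp add: power2_eq_square power4_eq_xxxx mult_ac)
      qed
      have e4: "\<tau>^2*(b \<tau>)^2 \<le> B^4"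
      proof -
        have "\<tau>^2*(b \<tau>)^2 = \<tau>^2*B^2" by (simp add: B_def)
        also have "\<dots> \<le> B^2*B^2" using t2 by (intro mult_right_mono) auto
        finally show ?thesis by (simp add: power2_eq_square power4_eq_xxxx mult_ac)
      qed
      have Kterm: "K*((a \<tau>)^2 + A*(b \<tau>)^2 + \<tau>^2*(A + (b \<tau>)^2)) \<le> g/4*B^3"
      proof -
        have "K*((a \<tau>)^2 + A*(b \<tau>)^2 + \<tau>^2*(A + (b \<tau>)^2)) \<le> K*(Q*B^4)"
          using e1 e2 e3 e4 K by (intro mult_left_mono) (auto simp: Q_def algebra_simps)
        also have "\<dots> = (K*Q*B)*B^3" by (simp add: power3_eq_cube power4_eq_xxxx)
        also have "\<dots> \<le> (K*Q*d)*B^3" using B K Q by (intro mult_right_mono mult_left_mono) auto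
        also have "\<dots> \<le> g/4*B^3" using d B by (intro mult_right_mono) auto
        finally show ?thesis .
      qed
      have s: "\<bar>\<sigma> \<tau>\<bar> \<le> S" using elim by simp
      have term1: "\<bar>\<tau>^3*Xm\<bar> \<le> \<bar>Xm\<bar>*B^3/N"
      proof -
        have "\<bar>\<tau>^3*Xm\<bar> = \<bar>Xm\<bar>*\<tau>^3" using t by (simp add: abs_mult)
        also have "\<dots> \<le> \<bar>Xm\<bar>*(B^3/N)" using t3N by (intro mult_left_mono) auto
        finally show ?thesis by simp
      qed
      have term2: "\<bar>c*b \<tau>*\<tau>^2*\<sigma> \<tau>\<bar> \<le> \<bar>c\<bar>*S*B^3/N"
      proof -
        have "\<bar>c*b \<tau>*\<tau>^2*\<sigma> \<tau>\<bar> = \<bar>c\<bar>*B*\<tau>^2*\<bar>\<sigma> \<tau>\<bar>" by (simp add: abs_mult B_def)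
        also have "\<dots> \<le> \<bar>c\<bar>*B*(B^2/N)*S" using t2N s B N by (intro mult_mono mult_left_mono) auto
        finally show ?thesis by (simp add: power3_eq_cube power2_eq_square mult_ac)
      qed
      have main: "\<bar>\<tau>^3*Xm - (-\<gamma>/6*(b \<tau>)^3 - c*b \<tau>*\<tau>^2*\<sigma> \<tau>)\<bar> \<le> g/4*B^3 + g/4*B^3"
        using elim Kterm by (simp add: A_def B_def)
      have gB: "\<bar>-\<gamma>/6*(b \<tau>)^3\<bar> = g*B^3" by (simp add: g_def B_def abs_mult power_abs)
      have "g*B^3 \<le> \<bar>\<tau>^3*Xm\<bar> + \<bar>c*b \<tau>*\<tau>^2*\<sigma> \<tau>\<bar> + (g/4*B^3 + g/4*B^3)"
        using main gB by linarith
      also have "\<dots> \<le> (\<bar>Xm\<bar> + \<bar>c\<bar>*S)/N*B^3 + (g/4*B^3 + g/4*B^3)"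
      proof -
        have "(\<bar>Xm\<bar> + \<bar>c\<bar>*S)/N*B^3 = \<bar>Xm\<bar>*B^3/N + \<bar>c\<bar>*S*B^3/N" using N by (simp add: field_simps)
        then show ?thesis using term1 term2 by linarith
      qed
      also have "(\<bar>Xm\<bar> + \<bar>c\<bar>*S)/N*B^3 \<le> g/4*B^3" using N2 B by (intro mult_right_mono) auto
      finally have "g*B^3 \<le> 3*(g/4*B^3)" by linarith
      moreover have "g/4*B^3 > 0" using B g by simp
      moreover have "g*B^3 = 3*(g/4*B^3) + g/4*B^3" by simp
      ultimately show False by linarith
    qed
  qed
qed

lemma t4le3: "0 \<le> (\<tau>::real) \<Longrightarrow> \<tau> \<le> 1 \<Longrightarrow> c \<ge> 0 \<Longrightarrow> c*\<tau>^4 \<le> c*\<tau>^3"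
proof -
  assume h: "0 \<le> \<tau>" "\<tau> \<le> 1" "c \<ge> 0"
  have "\<tau>^4 = \<tau>*\<tau>^3" by (simp add: power_numeral_reduce)
  also have "\<dots> \<le> 1*\<tau>^3" using h by (intro mult_right_mono) auto
  finally show ?thesis using h by (intro mult_left_mono) auto
qed

lemma stepC:
  fixes a b :: "real \<Rightarrow> real"
  assumes C: "C \<ge> 0" and N: "N \<ge> 1"
    and HA: "eventually (\<lambda>\<tau>. \<bar>a \<tau>\<bar> \<le> C*(\<tau>^2 + \<bar>b \<tau>\<bar>^3)) (at_right 0)"
    and HB: "eventually (\<lambda>\<tau>. \<bar>b \<tau>\<bar> \<le> N*\<tau>) (at_right 0)"
  shows "eventually (\<lambda>\<tau>. \<bar>a \<tau>\<bar> \<le> (C*(1+N^3))*\<tau>^2) (at_right 0)"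
  using HA HB ev_tau[OF zero_less_one]
proof eventually_elim
  case (elim \<tau>)
  have "\<bar>b \<tau>\<bar>^3 \<le> (N*\<tau>)^3" using elim by (intro power_mono) auto
  also have "\<dots> = N^3*(\<tau>*\<tau>^2)" by (simp add: power_mult_distrib power_numeral_reduce)
  also have "\<dots> \<le> N^3*(1*\<tau>^2)" using elim N by (intro mult_left_mono mult_right_mono) auto
  finally have "\<bar>b \<tau>\<bar>^3 \<le> N^3*\<tau>^2" by simp
  then have "C*(\<tau>^2 + \<bar>b \<tau>\<bar>^3) \<le> C*(\<tau>^2 + N^3*\<tau>^2)" using C by (intro mult_left_mono) auto
  then show ?case using elim by (simp add: algebra_simps)
qed

lemma stepD:
  fixes a b :: "real \<Rightarrow> real"
  assumes \<alpha>: "\<alpha> \<noteq> 0" and K: "K \<ge> 0" and Ca: "Ca \<ge> 0" and N: "N \<ge> 1"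
    and HA: "eventually (\<lambda>\<tau>. \<bar>a \<tau>\<bar> \<le> Ca*\<tau>^2) (at_right 0)"
    and HB: "eventually (\<lambda>\<tau>. \<bar>b \<tau>\<bar> \<le> N*\<tau>) (at_right 0)"
    and H: "eventually (\<lambda>\<tau>. \<bar>\<tau>^2*Xp - \<alpha>*a \<tau>\<bar> \<le> K*(\<bar>a \<tau>\<bar>*\<bar>b \<tau>\<bar> + \<bar>b \<tau>\<bar>^3 + (a \<tau>)^2 + \<bar>a \<tau>\<bar>*(b \<tau>)^2 + \<tau>^2*(\<bar>a \<tau>\<bar>+\<bar>b \<tau>\<bar>))) (at_right 0)"
  shows "((\<lambda>\<tau>. a \<tau> / \<tau>^2) \<longlongrightarrow> Xp/\<alpha>) (at_right 0)"
proof -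
  define Q where "Q = Ca*N + N^3 + Ca^2 + Ca*N^2 + Ca + N"
  have ev: "eventually (\<lambda>\<tau>. \<bar>a \<tau>/\<tau>^2 - Xp/\<alpha>\<bar> \<le> K*Q/\<bar>\<alpha>\<bar>*\<tau>) (at_right 0)"
    using HA HB H ev_tau[OF zero_less_one]
  proof eventually_elim
    case (elim \<tau>)
    define A where "A = \<bar>a \<tau>\<bar>"
    define B where "B = \<bar>b \<tau>\<bar>"
    have A: "0 \<le> A" "A \<le> Ca*\<tau>^2" and B: "0 \<le> B" "B \<le> N*\<tau>" and t: "0 < \<tau>" "\<tau> < 1"
      using elim by (auto simp: A_def B_def)
    have b1: "A*B \<le> Ca*N*\<tau>^3"
    proof -
      have "A*B \<le> (Ca*\<tau>^2)*(N*\<tau>)" using A B by (intro mult_mono) auto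
      then show ?thesis by (simp add: power_numeral_reduce mult_ac)
    qed
    have b2: "B^3 \<le> N^3*\<tau>^3"
    proof -
      have "B^3 \<le> (N*\<tau>)^3" using B by (intro power_mono) auto
      then show ?thesis by (simp add: power_mult_distrib)
    qed
    have b3: "A^2 \<le> Ca^2*\<tau>^3"
    proof -
      have "A^2 \<le> (Ca*\<tau>^2)^2" using A by (intro power_mono) auto
      also have "\<dots> = Ca^2*\<tau>^4" by (simp add: power_mult_distrib flip: power_mult)
      also have "\<dots> \<le> Ca^2*\<tau>^3" using t by (intro t4le3) auto
      finally show ?thesis .
    qed
    have b4: "A*B^2 \<le> Ca*N^2*\<tau>^3"
    proof -
      have "B^2 \<le> (N*\<tau>)^2" using B by (intro power_mono) auto
      then have "A*B^2 \<le> (Ca*\<tau>^2)*(N*\<tau>)^2" using A by (intro mult_mono) auto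
      also have "\<dots> = Ca*N^2*\<tau>^4" by (simp add: power_mult_distrib power_numeral_reduce mult_ac)
      also have "\<dots> \<le> Ca*N^2*\<tau>^3" using t Ca by (intro t4le3) auto
      finally show ?thesis .
    qed
    have b5: "\<tau>^2*A \<le> Ca*\<tau>^3"
    proof -
      have "\<tau>^2*A \<le> \<tau>^2*(Ca*\<tau>^2)" using A by (intro mult_left_mono) auto
      also have "\<dots> = Ca*\<tau>^4" by (simp add: power_numeral_reduce mult_ac)
      also have "\<dots> \<le> Ca*\<tau>^3" using t Ca by (intro t4le3) auto
      finally show ?thesis .
    qed
    have b6: "\<tau>^2*B \<le> N*\<tau>^3"
    proof -
      have "\<tau>^2*B \<le> \<tau>^2*(N*\<tau>)" using B by (intro mult_left_mono) auto
      then show ?thesis by (simp add: power_numeral_reduce mult_ac)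
    qed
    have "\<bar>\<tau>^2*Xp - \<alpha>*a \<tau>\<bar> \<le> K*(A*B + B^3 + A^2 + A*B^2 + \<tau>^2*A + \<tau>^2*B)"
      using elim by (simp add: A_def B_def algebra_simps power2_abs)
    also have "\<dots> \<le> K*(Q*\<tau>^3)"
      using b1 b2 b3 b4 b5 b6 K by (intro mult_left_mono) (auto simp: Q_def algebra_simps)
    finally have main: "\<bar>\<tau>^2*Xp - \<alpha>*a \<tau>\<bar> \<le> K*Q*\<tau>^3" by simp
    have "a \<tau>/\<tau>^2 - Xp/\<alpha> = -(\<tau>^2*Xp - \<alpha>*a \<tau>)/(\<alpha>*\<tau>^2)" using t \<alpha> by (simp add: field_simps)
    then have "\<bar>a \<tau>/\<tau>^2 - Xp/\<alpha>\<bar> = \<bar>\<tau>^2*Xp - \<alpha>*a \<tau>\<bar>/(\<bar>\<alpha>\<bar>*\<tau>^2)" by (simp add: abs_mult abs_minus_commute)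
    also have "\<dots> \<le> K*Q*\<tau>^3/(\<bar>\<alpha>\<bar>*\<tau>^2)" using main t \<alpha> by (intro divide_right_mono) auto
    also have "\<dots> = K*Q/\<bar>\<alpha>\<bar>*\<tau>" using t \<alpha> by (simp add: field_simps power_numeral_reduce)
    finally show ?case .
  qed
  have lim0: "((\<lambda>\<tau>. (K*Q/\<bar>\<alpha>\<bar>)*\<tau>) \<longlongrightarrow> 0) (at_right 0)"
    by (intro tendsto_mult_right_zero tendsto_ident_at)
  have "((\<lambda>\<tau>. a \<tau>/\<tau>^2 - Xp/\<alpha>) \<longlongrightarrow> 0) (at_right 0)"
    by (rule Lim_null_comparison[OF _ lim0]) (use ev in simp)
  then show ?thesis by (simp add: LIM_zero_iff)
qed

lemma stepE:
  fixes a b \<sigma> :: "real \<Rightarrow> real"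
  assumes K: "K \<ge> 0" and Ca: "Ca \<ge> 0" and N: "N \<ge> 1"
    and HA: "eventually (\<lambda>\<tau>. \<bar>a \<tau>\<bar> \<le> Ca*\<tau>^2) (at_right 0)"
    and HB: "eventually (\<lambda>\<tau>. \<bar>b \<tau>\<bar> \<le> N*\<tau>) (at_right 0)"
    and Hm: "\<And>\<epsilon>. \<epsilon> > 0 \<Longrightarrow> eventually (\<lambda>\<tau>. \<bar>\<tau>^3*Xm - (-\<gamma>/6*(b \<tau>)^3 - c*b \<tau>*\<tau>^2*\<sigma> \<tau>)\<bar>
              \<le> \<epsilon>*\<bar>b \<tau>\<bar>^3 + K*((a \<tau>)^2 + \<bar>a \<tau>\<bar>*(b \<tau>)^2 + \<tau>^2*(\<bar>a \<tau>\<bar> + (b \<tau>)^2))) (at_right 0)"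
    and Hs: "(\<sigma> \<longlongrightarrow> \<sigma>0) (at_right 0)"
  shows "((\<lambda>\<tau>. -\<gamma>/6*(b \<tau>/\<tau>)^3 - c*\<sigma>0*(b \<tau>/\<tau>)) \<longlongrightarrow> Xm) (at_right 0)"
proof -
  define Q where "Q = Ca^2 + Ca*N^2 + Ca + N^2"
  have Q: "Q \<ge> 0" using Ca N by (simp add: Q_def)
  have f1: "((\<lambda>\<tau>. Xm - (-\<gamma>/6*(b \<tau>/\<tau>)^3 - c*(b \<tau>/\<tau>)*\<sigma> \<tau>)) \<longlongrightarrow> 0) (at_right 0)"
  proof (rule tendstoI)
    fix e :: real assume e: "e > 0"
    define \<epsilon> where "\<epsilon> = e/(2*(N^3+1))"
    have N3: "N^3 \<ge> 1" using N by (simp add: one_le_power)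
    have \<epsilon>: "\<epsilon> > 0" "\<epsilon>*N^3 < e/2"
    proof -
      show "\<epsilon> > 0" unfolding \<epsilon>_def using e N3 by (intro divide_pos_pos) auto
      have "\<epsilon>*N^3 = e/2 * (N^3/(N^3+1))" using N by (simp add: \<epsilon>_def field_simps)
      also have "\<dots> < e/2*1" using e N3 by (intro mult_strict_left_mono) (auto simp: divide_less_eq_1)
      finally show "\<epsilon>*N^3 < e/2" by simp
    qed
    define d where "d = min 1 (e/(2*(K*Q+1)))"
    have KQ: "K*Q \<ge> 0" using K Q by simp
    have d: "d > 0" "d \<le> 1" "K*Q*d \<le> e/2"
    proof -
      show "d > 0" "d \<le> 1" using e KQ by (auto simp: d_def)
      have "K*Q*d \<le> K*Q*(e/(2*(K*Q+1)))" using KQ by (intro mult_left_mono) (auto simp: d_def)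
      also have "\<dots> = e/2*(K*Q/(K*Q+1))" using KQ by (simp add: field_simps)
      also have "\<dots> \<le> e/2*1" using KQ e by (intro mult_left_mono) (auto simp: divide_le_eq_1)
      finally show "K*Q*d \<le> e/2" by simp
    qed
    show "eventually (\<lambda>\<tau>. dist (Xm - (-\<gamma>/6*(b \<tau>/\<tau>)^3 - c*(b \<tau>/\<tau>)*\<sigma> \<tau>)) 0 < e) (at_right 0)"
      using HA HB Hm[OF \<epsilon>(1)] ev_tau[OF d(1)]
    proof eventually_elim
      case (elim \<tau>)
      define A where "A = \<bar>a \<tau>\<bar>"
      define B where "B = \<bar>b \<tau>\<bar>"
      have A: "0 \<le> A" "A \<le> Ca*\<tau>^2" and B: "0 \<le> B" "B \<le> N*\<tau>" and t: "0 < \<tau>" "\<tau> < d"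
        using elim by (auto simp: A_def B_def)
      have t1: "\<tau> \<le> 1" using t d by simp
      have b2: "B^3 \<le> N^3*\<tau>^3"
      proof -
        have "B^3 \<le> (N*\<tau>)^3" using B by (intro power_mono) auto
        then show ?thesis by (simp add: power_mult_distrib)
      qed
      have b3: "A^2 \<le> Ca^2*\<tau>^4"
      proof -
        have "A^2 \<le> (Ca*\<tau>^2)^2" using A by (intro power_mono) auto
        also have "\<dots> = Ca^2*\<tau>^4" by (simp add: power_mult_distrib flip: power_mult)
        finally show ?thesis .
      qed
      have b4: "A*B^2 \<le> Ca*N^2*\<tau>^4"
      proof -
        have "B^2 \<le> (N*\<tau>)^2" using B by (intro power_mono) auto
        then have "A*B^2 \<le> (Ca*\<tau>^2)*(N*\<tau>)^2" using A by (intro mult_mono) auto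
        also have "\<dots> = Ca*N^2*\<tau>^4" by (simp add: power_mult_distrib power_numeral_reduce mult_ac)
        finally show ?thesis .
      qed
      have b5: "\<tau>^2*A \<le> Ca*\<tau>^4"
      proof -
        have "\<tau>^2*A \<le> \<tau>^2*(Ca*\<tau>^2)" using A by (intro mult_left_mono) auto
        also have "\<dots> = Ca*\<tau>^4" by (simp add: power_numeral_reduce mult_ac)
        finally show ?thesis .
      qed
      have b6: "\<tau>^2*B^2 \<le> N^2*\<tau>^4"
      proof -
        have "B^2 \<le> (N*\<tau>)^2" using B by (intro power_mono) auto
        then have "\<tau>^2*B^2 \<le> \<tau>^2*(N*\<tau>)^2" by (intro mult_left_mono) auto
        then show ?thesis by (simp add: power_mult_distrib power_numeral_reduce mult_ac)
      qed
      have "\<bar>\<tau>^3*Xm - (-\<gamma>/6*(b \<tau>)^3 - c*b \<tau>*\<tau>^2*\<sigma> \<tau>)\<bar> \<le> \<epsilon>*B^3 + K*(A^2 + A*B^2 + \<tau>^2*A + \<tau>^2*B^2)"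
        using elim by (simp add: A_def B_def algebra_simps power2_abs)
      also have "\<dots> \<le> \<epsilon>*(N^3*\<tau>^3) + K*(Q*\<tau>^4)"
        using b2 b3 b4 b5 b6 K \<epsilon> by (intro add_mono mult_left_mono) (auto simp: Q_def algebra_simps)
      finally have main: "\<bar>\<tau>^3*Xm - (-\<gamma>/6*(b \<tau>)^3 - c*b \<tau>*\<tau>^2*\<sigma> \<tau>)\<bar> \<le> (\<epsilon>*N^3 + K*Q*\<tau>)*\<tau>^3"
        by (simp add: algebra_simps power_numeral_reduce)
      have eq: "Xm - (-\<gamma>/6*(b \<tau>/\<tau>)^3 - c*(b \<tau>/\<tau>)*\<sigma> \<tau>) = (\<tau>^3*Xm - (-\<gamma>/6*(b \<tau>)^3 - c*b \<tau>*\<tau>^2*\<sigma> \<tau>))/\<tau>^3"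
        using t by (simp add: field_simps power_numeral_reduce)
      have "\<bar>Xm - (-\<gamma>/6*(b \<tau>/\<tau>)^3 - c*(b \<tau>/\<tau>)*\<sigma> \<tau>)\<bar> \<le> (\<epsilon>*N^3 + K*Q*\<tau>)*\<tau>^3/\<tau>^3"
        unfolding eq using main t by (simp add: abs_divide pos_divide_le_eq)
      also have "\<dots> = \<epsilon>*N^3 + K*Q*\<tau>" using t by simp
      also have "K*Q*\<tau> \<le> K*Q*d" using t KQ by (intro mult_left_mono) auto
      finally show ?case using \<epsilon> d by (simp add: dist_real_def)
    qed
  qed
  have f2: "((\<lambda>\<tau>. c*(b \<tau>/\<tau>)*(\<sigma> \<tau> - \<sigma>0)) \<longlongrightarrow> 0) (at_right 0)"
  proof (rule Lim_null_comparison)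
    show "eventually (\<lambda>\<tau>. norm (c*(b \<tau>/\<tau>)*(\<sigma> \<tau> - \<sigma>0)) \<le> \<bar>c\<bar>*N*\<bar>\<sigma> \<tau> - \<sigma>0\<bar>) (at_right 0)"
      using HB ev_tau[OF zero_less_one]
    proof eventually_elim
      case (elim \<tau>)
      then have r: "\<bar>b \<tau>/\<tau>\<bar> \<le> N" by (simp add: abs_divide field_simps)
      have "\<bar>c*(b \<tau>/\<tau>)*(\<sigma> \<tau> - \<sigma>0)\<bar> = \<bar>c\<bar>*\<bar>b \<tau>/\<tau>\<bar>*\<bar>\<sigma> \<tau> - \<sigma>0\<bar>" by (simp only: abs_mult)
      also have "\<dots> \<le> \<bar>c\<bar>*N*\<bar>\<sigma> \<tau> - \<sigma>0\<bar>" using r by (intro mult_right_mono mult_left_mono) auto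
      finally show ?case by simp
    qed
    have "((\<lambda>\<tau>. \<sigma> \<tau> - \<sigma>0) \<longlongrightarrow> 0) (at_right 0)" using Hs by (simp add: LIM_zero_iff)
    then have "((\<lambda>\<tau>. \<bar>\<sigma> \<tau> - \<sigma>0\<bar>) \<longlongrightarrow> 0) (at_right 0)" using tendsto_rabs_zero by blast
    then show "((\<lambda>\<tau>. \<bar>c\<bar>*N*\<bar>\<sigma> \<tau> - \<sigma>0\<bar>) \<longlongrightarrow> 0) (at_right 0)"
      using tendsto_mult_right_zero by blast
  qed
  have "((\<lambda>\<tau>. (Xm - (-\<gamma>/6*(b \<tau>/\<tau>)^3 - c*(b \<tau>/\<tau>)*\<sigma> \<tau>)) - c*(b \<tau>/\<tau>)*(\<sigma> \<tau> - \<sigma>0)) \<longlongrightarrow> 0 - 0) (at_right 0)"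
    by (intro tendsto_diff f1 f2)
  then have lim: "((\<lambda>\<tau>. (Xm - (-\<gamma>/6*(b \<tau>/\<tau>)^3 - c*(b \<tau>/\<tau>)*\<sigma> \<tau>)) - c*(b \<tau>/\<tau>)*(\<sigma> \<tau> - \<sigma>0)) \<longlongrightarrow> 0) (at_right 0)"
    by simp
  have eqn: "\<And>\<rho> w. Xm - (-\<gamma>/6*\<rho>^3 - c*\<rho>*w) - c*\<rho>*(w - \<sigma>0) = Xm - (-\<gamma>/6*\<rho>^3 - c*\<sigma>0*\<rho>)"
    by (simp add: algebra_simps)
  have "((\<lambda>\<tau>. Xm - (-\<gamma>/6*(b \<tau>/\<tau>)^3 - c*\<sigma>0*(b \<tau>/\<tau>))) \<longlongrightarrow> 0) (at_right 0)"
    using lim unfolding eqn .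
  then have "((\<lambda>\<tau>. Xm - (Xm - (-\<gamma>/6*(b \<tau>/\<tau>)^3 - c*\<sigma>0*(b \<tau>/\<tau>)))) \<longlongrightarrow> Xm - 0) (at_right 0)"
    by (intro tendsto_diff tendsto_const)
  then show ?thesis by simp
qed



lemma mvt_any:
  fixes f f' :: "real \<Rightarrow> real"
  assumes d: "\<And>t. \<bar>t - x\<bar> \<le> \<bar>y - x\<bar> \<Longrightarrow> (f has_real_derivative f' t) (at t)"
  shows "\<exists>\<xi>. \<bar>\<xi> - x\<bar> \<le> \<bar>y - x\<bar> \<and> f y - f x = (y - x) * f' \<xi>"
proof (cases x y rule: linorder_cases)
  case less
  from MVT2[OF less, of f f'] d less obtain z where "x < z" "z < y" "f y - f x = (y - x) * f' z"
    by (smt (verit))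
  then show ?thesis by (intro exI[of _ z]) auto
next
  case equal then show ?thesis by (intro exI[of _ x]) auto
next
  case greater
  from MVT2[OF greater, of f f'] d greater obtain z where "y < z" "z < x" "f x - f y = (x - y) * f' z"
    by (smt (verit))
  then show ?thesis by (intro exI[of _ z]) (auto simp: algebra_simps)
qed

lemma lip_any:
  fixes f f' :: "real \<Rightarrow> real"
  assumes d: "\<And>t. \<bar>t - x\<bar> \<le> \<bar>y - x\<bar> \<Longrightarrow> (f has_real_derivative f' t) (at t)"
    and M: "\<And>t. \<bar>t - x\<bar> \<le> \<bar>y - x\<bar> \<Longrightarrow> \<bar>f' t\<bar> \<le> M"
  shows "\<bar>f y - f x\<bar> \<le> M * \<bar>y - x\<bar>"
proof -
  from mvt_any[OF d] obtain \<xi> where "\<bar>\<xi> - x\<bar> \<le> \<bar>y - x\<bar>" "f y - f x = (y - x) * f' \<xi>" by blast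
  then have "\<bar>f y - f x\<bar> = \<bar>y - x\<bar> * \<bar>f' \<xi>\<bar>" by (simp add: abs_mult)
  also have "\<dots> \<le> \<bar>y - x\<bar> * M" using M \<open>\<bar>\<xi> - x\<bar> \<le> \<bar>y - x\<bar>\<close> by (intro mult_left_mono) auto
  finally show ?thesis by (simp add: mult_ac)
qed

lemma taylor_any:
  fixes diff :: "nat \<Rightarrow> real \<Rightarrow> real"
  assumes n: "n > 0"
    and d: "\<And>m t. m < n \<Longrightarrow> \<bar>t - q\<bar> \<le> \<bar>b\<bar> \<Longrightarrow> (diff m has_real_derivative diff (Suc m) t) (at t)"
  shows "\<exists>\<theta>. \<bar>\<theta>\<bar> \<le> \<bar>b\<bar> \<and> diff 0 (q + b) = (\<Sum>m<n. diff m q / fact m * b^m) + diff n (q + \<theta>) / fact n * b^n"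
proof (cases "b = 0")
  case True
  have "(\<Sum>m<n. diff m q / fact m * b^m) = (\<Sum>m<n. if m = 0 then diff 0 q else 0)"
    by (rule sum.cong) (auto simp: True)
  also have "\<dots> = diff 0 q" using n by (simp add: sum.delta)
  finally show ?thesis using True n by (intro exI[of _ 0]) auto
next
  case False
  have "\<exists>t. (if q + b < q then q + b < t \<and> t < q else q < t \<and> t < q + b) \<and>
    diff 0 (q + b) = (\<Sum>m<n. (diff m q / fact m) * (q + b - q)^m) + (diff n t / fact n) * (q + b - q)^n"
    by (rule Taylor[of n diff "diff 0" "q - \<bar>b\<bar>" "q + \<bar>b\<bar>" q "q + b"]) (use n d False in \<open>auto simp: abs_le_iff\<close>)
  then obtain t where t: "(if q + b < q then q + b < t \<and> t < q else q < t \<and> t < q + b)"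
    "diff 0 (q + b) = (\<Sum>m<n. (diff m q / fact m) * b^m) + (diff n t / fact n) * b^n" by auto
  have "\<bar>t - q\<bar> \<le> \<bar>b\<bar>" using t(1) by (auto split: if_splits)
  then show ?thesis using t(2) by (intro exI[of _ "t - q"]) auto
qed

lemma expand2:
  fixes G Gx Gxx Gxy Gxyy Gy Gyy Gyyy :: "real \<Rightarrow> real \<Rightarrow> real"
  assumes ab: "\<bar>a\<bar> < \<eta>" "\<bar>b\<bar> < \<eta>"
    and d1: "\<And>x y. \<bar>x-p\<bar> < \<eta> \<Longrightarrow> \<bar>y-q\<bar> < \<eta> \<Longrightarrow> ((\<lambda>x. G x y) has_real_derivative Gx x y) (at x)"
    and d11: "\<And>x y. \<bar>x-p\<bar> < \<eta> \<Longrightarrow> \<bar>y-q\<bar> < \<eta> \<Longrightarrow> ((\<lambda>x. Gx x y) has_real_derivative Gxx x y) (at x)"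
    and d12: "\<And>x y. \<bar>x-p\<bar> < \<eta> \<Longrightarrow> \<bar>y-q\<bar> < \<eta> \<Longrightarrow> ((\<lambda>y. Gx x y) has_real_derivative Gxy x y) (at y)"
    and d122: "\<And>x y. \<bar>x-p\<bar> < \<eta> \<Longrightarrow> \<bar>y-q\<bar> < \<eta> \<Longrightarrow> ((\<lambda>y. Gxy x y) has_real_derivative Gxyy x y) (at y)"
    and d2: "\<And>x y. \<bar>x-p\<bar> < \<eta> \<Longrightarrow> \<bar>y-q\<bar> < \<eta> \<Longrightarrow> ((\<lambda>y. G x y) has_real_derivative Gy x y) (at y)"
    and d22: "\<And>x y. \<bar>x-p\<bar> < \<eta> \<Longrightarrow> \<bar>y-q\<bar> < \<eta> \<Longrightarrow> ((\<lambda>y. Gy x y) has_real_derivative Gyy x y) (at y)"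
    and d222: "\<And>x y. \<bar>x-p\<bar> < \<eta> \<Longrightarrow> \<bar>y-q\<bar> < \<eta> \<Longrightarrow> ((\<lambda>y. Gyy x y) has_real_derivative Gyyy x y) (at y)"
    and bd: "\<And>x y. \<bar>x-p\<bar> < \<eta> \<Longrightarrow> \<bar>y-q\<bar> < \<eta> \<Longrightarrow> \<bar>Gxx x y\<bar> \<le> M \<and> \<bar>Gxyy x y\<bar> \<le> M"
  shows "\<exists>\<theta>. \<bar>\<theta>\<bar> \<le> \<bar>b\<bar> \<and> \<bar>G (p+a) (q+b) - G p q - (a*Gx p q + a*b*Gxy p q + b*Gy p q + b^2/2*Gyy p q + b^3/6*Gyyy p (q+\<theta>))\<bar> \<le> M*(a^2 + \<bar>a\<bar>*b^2)"
proof -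
  have M: "M \<ge> 0" using bd[of p q] ab by force
  obtain \<xi> where \<xi>: "\<bar>\<xi> - p\<bar> \<le> \<bar>a\<bar>" "G (p+a) (q+b) - G p (q+b) = a * Gx \<xi> (q+b)"
    using mvt_any[of p "p+a" "\<lambda>x. G x (q+b)" "\<lambda>x. Gx x (q+b)"] d1 ab by force
  have l: "\<bar>Gx \<xi> (q+b) - Gx p (q+b)\<bar> \<le> M * \<bar>\<xi> - p\<bar>"
    by (rule lip_any[of p \<xi> "\<lambda>x. Gx x (q+b)" "\<lambda>x. Gxx x (q+b)"]) (use d11 bd ab \<xi> in force)+
  define D1 where "D1 = (\<lambda>m::nat. if m = 0 then (\<lambda>y. Gx p y) else if m = 1 then (\<lambda>y. Gxy p y) else (\<lambda>y. Gxyy p y))"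
  obtain \<theta>1 where \<theta>1: "\<bar>\<theta>1\<bar> \<le> \<bar>b\<bar>" "D1 0 (q+b) = (\<Sum>m<2. D1 m q / fact m * b^m) + D1 2 (q+\<theta>1) / fact 2 * b^2"
    using taylor_any[where n=2 and diff=D1 and q=q and b=b] d12 d122 ab by (force simp: D1_def less_2_cases_iff)
  have T1: "Gx p (q+b) = Gx p q + b*Gxy p q + b^2/2*Gxyy p (q+\<theta>1)"
    using \<theta>1(2) by (simp add: D1_def numeral_2_eq_2)
  define D where "D = (\<lambda>m::nat. if m = 0 then (\<lambda>y. G p y) else if m = 1 then (\<lambda>y. Gy p y) else if m = 2 then (\<lambda>y. Gyy p y) else (\<lambda>y. Gyyy p y))"
  obtain \<theta> where \<theta>: "\<bar>\<theta>\<bar> \<le> \<bar>b\<bar>" "D 0 (q+b) = (\<Sum>m<3. D m q / fact m * b^m) + D 3 (q+\<theta>) / fact 3 * b^3"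
  proof -
    have "\<And>m t. m < 3 \<Longrightarrow> \<bar>t - q\<bar> \<le> \<bar>b\<bar> \<Longrightarrow> (D m has_real_derivative D (Suc m) t) (at t)"
    proof -
      fix m t assume "m < (3::nat)" "\<bar>t - q\<bar> \<le> \<bar>b\<bar>"
      then have "m = 0 \<or> m = 1 \<or> m = 2" "\<bar>t - q\<bar> < \<eta>" using ab by auto
      then show "(D m has_real_derivative D (Suc m) t) (at t)"
        using d2[of p t] d22[of p t] d222[of p t] ab by (auto simp: D_def)
    qed
    then show ?thesis using taylor_any[where n=3 and diff=D and q=q and b=b] that by auto
  qed
  have T: "G p (q+b) = G p q + b*Gy p q + b^2/2*Gyy p q + b^3/6*Gyyy p (q+\<theta>)"
    using \<theta>(2) by (simp add: D_def numeral_3_eq_3 numeral_2_eq_2 fact_numeral; simp add: algebra_simps)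
  have eq: "G (p+a) (q+b) - G p q - (a*Gx p q + a*b*Gxy p q + b*Gy p q + b^2/2*Gyy p q + b^3/6*Gyyy p (q+\<theta>))
      = a*(Gx \<xi> (q+b) - Gx p (q+b)) + a*(b^2/2*Gxyy p (q+\<theta>1))"
    using \<xi>(2) T T1 by (simp add: algebra_simps)
  have e1: "\<bar>a*(Gx \<xi> (q+b) - Gx p (q+b))\<bar> \<le> M*a^2"
  proof -
    have "\<bar>a*(Gx \<xi> (q+b) - Gx p (q+b))\<bar> \<le> \<bar>a\<bar>*(M*\<bar>a\<bar>)"
      unfolding abs_mult using l \<xi>(1) M by (intro mult_left_mono) (auto intro: order.trans mult_left_mono)
    then show ?thesis by (simp add: power2_eq_square abs_mult_self mult_ac)
  qed
  have e2: "\<bar>a*(b^2/2*Gxyy p (q+\<theta>1))\<bar> \<le> M*(\<bar>a\<bar>*b^2)"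
  proof -
    have "\<bar>Gxyy p (q+\<theta>1)\<bar> \<le> M" using bd[of p "q+\<theta>1"] \<theta>1(1) ab by auto
    then have "\<bar>a*(b^2/2*Gxyy p (q+\<theta>1))\<bar> \<le> \<bar>a\<bar>*(b^2/2*M)"
      unfolding abs_mult by (intro mult_left_mono) (auto intro!: mult_left_mono)
    also have "\<dots> \<le> M*(\<bar>a\<bar>*b^2)" using M by (simp add: mult_ac mult_left_mono)
    finally show ?thesis .
  qed
  have "\<bar>a*(Gx \<xi> (q+b) - Gx p (q+b)) + a*(b^2/2*Gxyy p (q+\<theta>1))\<bar> \<le> M*a^2 + M*(\<bar>a\<bar>*b^2)"
    using e1 e2 abs_triangle_ineq[of "a*(Gx \<xi> (q+b) - Gx p (q+b))" "a*(b^2/2*Gxyy p (q+\<theta>1))"] by linarith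
  then have "\<bar>G (p+a) (q+b) - G p q - (a*Gx p q + a*b*Gxy p q + b*Gy p q + b^2/2*Gyy p q + b^3/6*Gyyy p (q+\<theta>))\<bar> \<le> M*(a^2 + \<bar>a\<bar>*b^2)"
    unfolding eq by (simp add: distrib_left)
  then show ?thesis using \<theta>(1) by blast
qed



lemma near_roots:
  fixes \<rho> P :: "real \<Rightarrow> real"
  assumes contP: "continuous_on UNIV P"
    and bnd: "eventually (\<lambda>\<tau>. \<bar>\<rho> \<tau>\<bar> \<le> N) F"
    and lim: "((\<lambda>\<tau>. P (\<rho> \<tau>)) \<longlongrightarrow> c) F"
    and e: "e > 0"
  shows "eventually (\<lambda>\<tau>. \<exists>z. P z = c \<and> \<bar>\<rho> \<tau> - z\<bar> < e) F"
proof -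
  define Z where "Z = {y. P y = c}"
  define K where "K = cball 0 N \<inter> (\<Inter>z\<in>Z. - ball z e)"
  have cK: "compact K" unfolding K_def
    by (intro compact_Int_closed compact_cball closed_INT) auto
  have Kchar: "y \<in> K \<longleftrightarrow> \<bar>y\<bar> \<le> N \<and> (\<forall>z. P z = c \<longrightarrow> e \<le> \<bar>y - z\<bar>)" for y
    by (auto simp: K_def Z_def dist_real_def abs_minus_commute)
  obtain m where m: "m > 0" "\<And>y. y \<in> K \<Longrightarrow> m \<le> \<bar>P y - c\<bar>"
  proof (cases "K = {}")
    case True then show ?thesis using that[of 1] by auto
  next
    case False
    have "continuous_on K (\<lambda>y. \<bar>P y - c\<bar>)"
      by (intro continuous_intros continuous_on_subset[OF contP]) auto
    from continuous_attains_inf[OF cK False this] obtain x where x: "x \<in> K" "\<And>y. y \<in> K \<Longrightarrow> \<bar>P x - c\<bar> \<le> \<bar>P y - c\<bar>"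
      by blast
    have "P x \<noteq> c" using x(1) e unfolding Kchar by force
    then show ?thesis using that[of "\<bar>P x - c\<bar>"] x(2) by auto
  qed
  have "eventually (\<lambda>\<tau>. dist (P (\<rho> \<tau>)) c < m) F" using tendstoD[OF lim m(1)] .
  then show ?thesis using bnd
  proof eventually_elim
    case (elim \<tau>)
    then have "\<rho> \<tau> \<notin> K" using m(2)[of "\<rho> \<tau>"] by (auto simp: dist_real_def)
    then show ?case using elim Kchar by force
  qed
qed

lemma conv_root:
  fixes \<rho> P :: "real \<Rightarrow> real"
  assumes contP: "continuous_on UNIV P"
    and fin: "finite {y. P y = c}"
    and contr: "continuous_on {0<..<T} \<rho>" and T: "T > 0"
    and bnd: "eventually (\<lambda>\<tau>. \<bar>\<rho> \<tau>\<bar> \<le> N) (at_right 0)"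
    and lim: "((\<lambda>\<tau>. P (\<rho> \<tau>)) \<longlongrightarrow> c) (at_right 0)"
  shows "\<exists>R. (\<rho> \<longlongrightarrow> R) (at_right 0) \<and> P R = c"
proof -
  define Z where "Z = {y. P y = c}"
  define D where "D = (\<lambda>(z,z'). \<bar>z - z'\<bar>) ` {(z,z'). z \<in> Z \<and> z' \<in> Z \<and> z \<noteq> z'}"
  have finD: "finite D" unfolding D_def
    by (rule finite_imageI, rule finite_subset[of _ "Z \<times> Z"]) (use fin in \<open>auto simp: Z_def\<close>)
  define e0 where "e0 = (if D = {} then 1 else Min D / 2)"
  have e0: "e0 > 0" and sep: "\<And>z z'. z \<in> Z \<Longrightarrow> z' \<in> Z \<Longrightarrow> z \<noteq> z' \<Longrightarrow> 2*e0 \<le> \<bar>z - z'\<bar>"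
  proof -
    have Dpos: "\<And>d. d \<in> D \<Longrightarrow> d > 0" by (auto simp: D_def)
    show "e0 > 0"
      using Dpos Min_in[OF finD] by (auto simp: e0_def)
    fix z z' assume "z \<in> Z" "z' \<in> Z" "z \<noteq> z'"
    then have "\<bar>z - z'\<bar> \<in> D" by (force simp: D_def)
    then show "2*e0 \<le> \<bar>z - z'\<bar>" using Min_le[OF finD] by (auto simp: e0_def)
  qed
  have near: "\<And>e. e > 0 \<Longrightarrow> eventually (\<lambda>\<tau>. \<exists>z\<in>Z. \<bar>\<rho> \<tau> - z\<bar> < e) (at_right 0)"
    using near_roots[OF contP bnd lim] by (auto simp: Z_def)
  from near[OF e0] obtain T1 where T1: "T1 > 0" "\<And>\<tau>. 0 < \<tau> \<Longrightarrow> \<tau> < T1 \<Longrightarrow> \<exists>z\<in>Z. \<bar>\<rho> \<tau> - z\<bar> < e0"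
    unfolding eventually_at_right_field by auto
  define T2 where "T2 = min T T1"
  have T2: "T2 > 0" "T2 \<le> T" "T2 \<le> T1" using T T1 by (auto simp: T2_def)
  define S where "S = \<rho> ` {0<..<T2}"
  have cS: "connected S" unfolding S_def
    by (intro connected_continuous_image continuous_on_subset[OF contr]) (use T2 in auto)
  obtain zs where zs: "zs \<in> Z" "\<bar>\<rho> (T2/2) - zs\<bar> < e0" using T1(2)[of "T2/2"] T2 by auto
  define A where "A = ball zs e0"
  define B where "B = (\<Union>z\<in>Z - {zs}. ball z e0)"
  have disj: "A \<inter> B = {}"
  proof -
    { fix y z assume "z \<in> Z" "z \<noteq> zs" "dist zs y < e0" "dist z y < e0"
      then have "\<bar>z - zs\<bar> < 2*e0" by (auto simp: dist_real_def)
      moreover have "2*e0 \<le> \<bar>z - zs\<bar>" using sep[of z zs] \<open>z \<in> Z\<close> \<open>z \<noteq> zs\<close> zs(1) by auto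
      ultimately have False by simp }
    note h = this
    show ?thesis unfolding A_def B_def
    proof (rule equals0I)
      fix y assume "y \<in> ball zs e0 \<inter> (\<Union>z\<in>Z - {zs}. ball z e0)"
      then obtain z where "z \<in> Z" "z \<noteq> zs" "dist zs y < e0" "dist z y < e0" by auto
      then show False by (rule h)
    qed
  qed
  have SAB: "S \<subseteq> A \<union> B"
  proof
    fix y assume "y \<in> S"
    then obtain \<tau> where "0 < \<tau>" "\<tau> < T2" "y = \<rho> \<tau>" by (auto simp: S_def)
    then obtain z where "z \<in> Z" "\<bar>y - z\<bar> < e0" using T1(2) T2 by force
    then show "y \<in> A \<union> B" by (cases "z = zs") (auto simp: A_def B_def dist_real_def abs_minus_commute)
  qed
  have "A \<inter> S \<noteq> {}" using zs T2 by (auto simp: A_def S_def dist_real_def abs_minus_commute intro!: exI[of _ "\<rho> (T2/2)"])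
  then have "B \<inter> S = {}" using connectedD[OF cS _ _ _ SAB] disj by (auto simp: A_def B_def)
  then have SA: "S \<subseteq> A" using SAB by auto
  have "(\<rho> \<longlongrightarrow> zs) (at_right 0)"
  proof (rule tendstoI)
    fix e :: real assume e: "e > 0"
    have "eventually (\<lambda>\<tau>. \<exists>z\<in>Z. \<bar>\<rho> \<tau> - z\<bar> < min e e0) (at_right 0)" using near[of "min e e0"] e e0 by simp
    moreover have "eventually (\<lambda>\<tau>. 0 < \<tau> \<and> \<tau> < T2) (at_right 0)" unfolding eventually_at_right_field using T2 by auto
    ultimately show "eventually (\<lambda>\<tau>. dist (\<rho> \<tau>) zs < e) (at_right 0)"
    proof eventually_elim
      case (elim \<tau>)
      then obtain z where z: "z \<in> Z" "\<bar>\<rho> \<tau> - z\<bar> < min e e0" by auto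
      have "\<rho> \<tau> \<in> A" using SA elim by (auto simp: S_def)
      then have r: "\<bar>\<rho> \<tau> - zs\<bar> < e0" by (auto simp: A_def dist_real_def abs_minus_commute)
      have "z = zs"
      proof (rule ccontr)
        assume "z \<noteq> zs"
        then have "2*e0 \<le> \<bar>z - zs\<bar>" using sep z(1) zs(1) by auto
        moreover have "\<bar>z - zs\<bar> < 2*e0" using r z(2) by linarith
        ultimately show False by simp
      qed
      then show ?case using z by (simp add: dist_real_def)
    qed
  qed
  then show ?thesis using zs(1) by (auto simp: Z_def)
qed



lemma sm_d1:
  assumes "smooth_on S f" "(x, y) \<in> S"
  shows "((\<lambda>x. pds ds f x y) has_real_derivative pds (False # ds) f x y) (at x)"
proof -
  have "(\<lambda>x. pds ds f x y) differentiable (at x)" using assms unfolding smooth_on_def by force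
  then show ?thesis by (simp add: pd1_def DERIV_deriv_iff_real_differentiable)
qed

lemma sm_d2:
  assumes "smooth_on S f" "(x, y) \<in> S"
  shows "((\<lambda>y. pds ds f x y) has_real_derivative pds (True # ds) f x y) (at y)"
proof -
  have "(\<lambda>y. pds ds f x y) differentiable (at y)" using assms unfolding smooth_on_def by force
  then show ?thesis by (simp add: pd2_def DERIV_deriv_iff_real_differentiable)
qed

lemma sm_cont:
  assumes "smooth_on S f" "open S" "p \<in> S"
  shows "isCont (\<lambda>q. pds ds f (fst q) (snd q)) p"
  using assms unfolding smooth_on_def by (metis continuous_on_eq_continuous_at)

lemma sm_cont_on:
  assumes "smooth_on S f"
  shows "continuous_on S (\<lambda>q. f (fst q) (snd q))"
  using assms unfolding smooth_on_def by (metis pds.simps(1))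

lemma bound_near:
  fixes r0 :: "'a::metric_space"
  assumes "\<forall>g\<in>set gs. isCont g r0"
  shows "\<exists>e>0. \<exists>M. \<forall>p. dist p r0 < e \<longrightarrow> (\<forall>g\<in>set gs. \<bar>g p :: real\<bar> \<le> M)"
  using assms
proof (induction gs)
  case Nil then show ?case by (intro exI[of _ 1]) auto
next
  case (Cons g gs)
  then obtain e1 M1 where e1: "e1 > 0" "\<forall>p. dist p r0 < e1 \<longrightarrow> (\<forall>g\<in>set gs. \<bar>g p\<bar> \<le> M1)" by auto
  have "isCont g r0" using Cons.prems by simp
  then obtain e2 where e2: "e2 > 0" "\<forall>p. dist p r0 < e2 \<longrightarrow> dist (g p) (g r0) < 1"
    unfolding continuous_at_eps_delta by (meson zero_less_one)
  have "\<forall>p. dist p r0 < min e1 e2 \<longrightarrow> (\<forall>h\<in>set (g # gs). \<bar>h p\<bar> \<le> max M1 (\<bar>g r0\<bar> + 1))"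
  proof (intro allI impI)
    fix p assume "dist p r0 < min e1 e2"
    then have "dist p r0 < e1" "dist p r0 < e2" by auto
    then have "\<forall>g\<in>set gs. \<bar>g p\<bar> \<le> M1" "\<bar>g p - g r0\<bar> < 1" using e1 e2 by (auto simp: dist_real_def)
    then show "\<forall>h\<in>set (g # gs). \<bar>h p\<bar> \<le> max M1 (\<bar>g r0\<bar> + 1)" by force
  qed
  moreover have "min e1 e2 > 0" using e1 e2 by simp
  ultimately show ?case by blast
qed

lemma dist_pair_le: "dist (x, y) (a, b) \<le> \<bar>x - a\<bar> + \<bar>y - b\<bar>" for x y a b :: real
proof -
  have "dist (x, y) (a, b) \<le> dist (x, y) (x, b) + dist (x, b) (a, b)" by (rule dist_triangle)
  also have "\<dots> = \<bar>y - b\<bar> + \<bar>x - a\<bar>" by (simp add: dist_Pair_Pair dist_real_def)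
  finally show ?thesis by simp
qed

lemma cubic_root:
  fixes \<gamma> \<beta> w :: real
  assumes "\<gamma> \<noteq> 0"
  shows "\<exists>R. w = \<beta>*R - \<gamma>*R^3/6"
proof -
  define f where "f R = \<beta>*R - \<gamma>*R^3/6" for R
  define Y where "Y = 1 + 6*(\<bar>\<beta>\<bar> + \<bar>w\<bar>)/\<bar>\<gamma>\<bar>"
  have g: "\<bar>\<gamma>\<bar> > 0" using assms by simp
  have Y1: "Y \<ge> 1" using g by (simp add: Y_def)
  have "Y*Y \<ge> Y*(6*(\<bar>\<beta>\<bar> + \<bar>w\<bar>)/\<bar>\<gamma>\<bar> + 1)" using Y1 by (intro mult_left_mono) (auto simp: Y_def)
  then have "\<bar>\<gamma>\<bar>*(Y*Y*Y) \<ge> \<bar>\<gamma>\<bar>*(Y*(Y*(6*(\<bar>\<beta>\<bar> + \<bar>w\<bar>)/\<bar>\<gamma>\<bar> + 1)))" using Y1 g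
    by (intro mult_left_mono) (auto simp: mult.assoc)
  also have "\<bar>\<gamma>\<bar>*(Y*(Y*(6*(\<bar>\<beta>\<bar> + \<bar>w\<bar>)/\<bar>\<gamma>\<bar> + 1))) = Y*(Y*6*(\<bar>\<beta>\<bar> + \<bar>w\<bar>) + Y*\<bar>\<gamma>\<bar>)"
    using g by (simp add: field_simps)
  finally have h: "\<bar>\<gamma>\<bar>*(Y*Y*Y) \<ge> Y*(Y*6*(\<bar>\<beta>\<bar> + \<bar>w\<bar>) + Y*\<bar>\<gamma>\<bar>)" .
  have "Y*(Y*6*(\<bar>\<beta>\<bar> + \<bar>w\<bar>) + Y*\<bar>\<gamma>\<bar>) > 6*(\<bar>\<beta>\<bar>*Y + \<bar>w\<bar>)"
  proof -
    have "Y*(Y*6*(\<bar>\<beta>\<bar> + \<bar>w\<bar>)) \<ge> 1*(Y*6*(\<bar>\<beta>\<bar> + \<bar>w\<bar>))" using Y1 by (intro mult_right_mono) auto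
    moreover have "1*\<bar>w\<bar> \<le> Y*\<bar>w\<bar>" using Y1 by (intro mult_right_mono) auto
    then have "Y*6*(\<bar>\<beta>\<bar> + \<bar>w\<bar>) \<ge> 6*(\<bar>\<beta>\<bar>*Y + \<bar>w\<bar>)" by (simp add: algebra_simps)
    moreover have "Y*(Y*\<bar>\<gamma>\<bar>) > 0" using Y1 g by simp
    ultimately show ?thesis by (simp add: algebra_simps)
  qed
  with h have big: "\<bar>\<gamma>\<bar>*Y^3/6 > \<bar>\<beta>\<bar>*Y + \<bar>w\<bar>" by (simp add: power3_eq_cube)
  have "\<bar>f Y\<bar> \<ge> \<bar>\<gamma>*Y^3/6\<bar> - \<bar>\<beta>*Y\<bar>" by (simp add: f_def)
  also have "\<bar>\<gamma>*Y^3/6\<bar> = \<bar>\<gamma>\<bar>*Y^3/6" using Y1 by (simp add: abs_mult)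
  also have "\<bar>\<beta>*Y\<bar> = \<bar>\<beta>\<bar>*Y" using Y1 by (simp add: abs_mult)
  finally have fY: "\<bar>f Y\<bar> > \<bar>w\<bar>" using big by linarith
  have odd: "f (-Y) = - f Y" by (simp add: f_def)
  have cont: "\<forall>x. isCont f x" unfolding f_def by (intro allI continuous_intros) auto
  have "\<exists>x. - Y \<le> x \<and> x \<le> Y \<and> f x = w"
  proof (cases "f Y > 0")
    case True
    then have "f (-Y) \<le> w" "w \<le> f Y" using fY odd by auto
    then show ?thesis using IVT[of f "-Y" w Y] cont Y1 by auto
  next
    case False
    then have "f Y \<le> w" "w \<le> f (-Y)" using fY odd by auto
    then show ?thesis using IVT2[of f Y w "-Y"] cont Y1 by auto
  qed
  then show ?thesis by (auto simp: f_def)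
qed



lemma ab_le1: "\<bar>a\<bar> \<le> 1 \<Longrightarrow> \<bar>b\<bar> \<le> 1 \<Longrightarrow> \<bar>a\<bar>*\<bar>b\<bar> \<le> \<bar>a\<bar>" for a b :: real
  by (simp add: mult_left_le)

lemma sq_le1: "\<bar>b\<bar> \<le> 1 \<Longrightarrow> b^2 \<le> \<bar>b\<bar>" for b :: real
proof -
  assume h: "\<bar>b\<bar> \<le> 1"
  have "b^2 = \<bar>b\<bar>*\<bar>b\<bar>" by (simp add: power2_eq_square abs_mult_self)
  also have "\<dots> \<le> 1*\<bar>b\<bar>" using h by (intro mult_right_mono) auto
  finally show ?thesis by simp
qed

lemma cube_le1: "\<bar>b\<bar> \<le> 1 \<Longrightarrow> \<bar>b\<bar>^3 \<le> b^2" for b :: real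
proof -
  assume h: "\<bar>b\<bar> \<le> 1"
  have "\<bar>b\<bar>^3 = \<bar>b\<bar>*\<bar>b\<bar>^2" by (simp add: power3_eq_cube power2_eq_square)
  also have "\<dots> \<le> 1*\<bar>b\<bar>^2" using h by (intro mult_right_mono) auto
  finally show ?thesis by simp
qed

lemma abs3: "\<bar>x1+x2+x3\<bar> \<le> \<bar>x1\<bar>+\<bar>x2\<bar>+\<bar>x3::real\<bar>"
  by (rule order_trans[OF abs_triangle_ineq], rule add_right_mono, rule abs_triangle_ineq)

lemma abs4: "\<bar>x1+x2+x3+x4\<bar> \<le> \<bar>x1\<bar>+\<bar>x2\<bar>+\<bar>x3\<bar>+\<bar>x4::real\<bar>"
  by (rule order_trans[OF abs_triangle_ineq], rule add_right_mono, rule abs3)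

lemma abs5: "\<bar>x1+x2+x3+x4+x5\<bar> \<le> \<bar>x1\<bar>+\<bar>x2\<bar>+\<bar>x3\<bar>+\<bar>x4\<bar>+\<bar>x5::real\<bar>"
  by (rule order_trans[OF abs_triangle_ineq], rule add_right_mono, rule abs4)

lemma abs_pm4: "\<bar>x1+x2+x3-x4\<bar> \<le> \<bar>x1\<bar>+\<bar>x2\<bar>+\<bar>x3\<bar>+\<bar>x4::real\<bar>"
  using abs4[of x1 x2 x3 "-x4"] by simp

lemma abs_pm3: "\<bar>x1+x2-x4\<bar> \<le> \<bar>x1\<bar>+\<bar>x2\<bar>+\<bar>x4::real\<bar>"
  using abs3[of x1 x2 "-x4"] by simp

lemma taylor_poly_bound:
  fixes a b l1 l12 l2 l22 l3 M :: real
  assumes "\<bar>a\<bar> \<le> 1" "\<bar>b\<bar> \<le> 1" "\<bar>l3\<bar> \<le> M"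
  shows "\<bar>a*l1 + a*b*l12 + b*l2 + b^2/2*l22 + b^3/6*l3\<bar> \<le> (\<bar>l1\<bar>+\<bar>l12\<bar>+\<bar>l2\<bar>+\<bar>l22\<bar>+M)*(\<bar>a\<bar>+\<bar>b\<bar>)"
proof -
  have M: "M \<ge> 0" using assms(3) by linarith
  have b2: "b^2 \<le> \<bar>b\<bar>" using sq_le1 assms by blast
  have b3: "\<bar>b\<bar>^3 \<le> \<bar>b\<bar>" using cube_le1[OF assms(2)] b2 by linarith
  have ab: "\<bar>a\<bar>*\<bar>b\<bar> \<le> \<bar>a\<bar>" using ab_le1 assms by blast
  have t1: "\<bar>a*l1\<bar> \<le> \<bar>l1\<bar>*(\<bar>a\<bar>+\<bar>b\<bar>)"
  proof -
    have "\<bar>a*l1\<bar> = \<bar>l1\<bar>*\<bar>a\<bar>" by (simp add: abs_mult)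
    also have "\<dots> \<le> \<bar>l1\<bar>*(\<bar>a\<bar>+\<bar>b\<bar>)" by (intro mult_left_mono) auto
    finally show ?thesis .
  qed
  have t2: "\<bar>a*b*l12\<bar> \<le> \<bar>l12\<bar>*(\<bar>a\<bar>+\<bar>b\<bar>)"
  proof -
    have "\<bar>a*b*l12\<bar> = \<bar>l12\<bar>*(\<bar>a\<bar>*\<bar>b\<bar>)" by (simp add: abs_mult mult_ac)
    also have "\<dots> \<le> \<bar>l12\<bar>*(\<bar>a\<bar>+\<bar>b\<bar>)" using ab by (intro mult_left_mono) auto
    finally show ?thesis .
  qed
  have t3: "\<bar>b*l2\<bar> \<le> \<bar>l2\<bar>*(\<bar>a\<bar>+\<bar>b\<bar>)"
  proof -
    have "\<bar>b*l2\<bar> = \<bar>l2\<bar>*\<bar>b\<bar>" by (simp add: abs_mult)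
    also have "\<dots> \<le> \<bar>l2\<bar>*(\<bar>a\<bar>+\<bar>b\<bar>)" by (intro mult_left_mono) auto
    finally show ?thesis .
  qed
  have t4: "\<bar>b^2/2*l22\<bar> \<le> \<bar>l22\<bar>*(\<bar>a\<bar>+\<bar>b\<bar>)"
  proof -
    have "\<bar>b^2/2*l22\<bar> = \<bar>l22\<bar>*(b^2/2)" by (simp add: abs_mult mult_ac)
    also have "\<dots> \<le> \<bar>l22\<bar>*(\<bar>a\<bar>+\<bar>b\<bar>)" using b2 by (intro mult_left_mono) auto
    finally show ?thesis .
  qed
  have t5: "\<bar>b^3/6*l3\<bar> \<le> M*(\<bar>a\<bar>+\<bar>b\<bar>)"
  proof -
    have "\<bar>b^3/6*l3\<bar> = \<bar>l3\<bar>*(\<bar>b\<bar>^3/6)" by (simp add: abs_mult power_abs mult_ac)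
    also have "\<dots> \<le> M*(\<bar>a\<bar>+\<bar>b\<bar>)" using b3 assms(3) by (intro mult_mono) auto
    finally show ?thesis .
  qed
  have "\<bar>a*l1 + a*b*l12 + b*l2 + b^2/2*l22 + b^3/6*l3\<bar> \<le> \<bar>a*l1\<bar> + \<bar>a*b*l12\<bar> + \<bar>b*l2\<bar> + \<bar>b^2/2*l22\<bar> + \<bar>b^3/6*l3\<bar>"
    by (rule abs5)
  also have "\<dots> \<le> (\<bar>l1\<bar>+\<bar>l12\<bar>+\<bar>l2\<bar>+\<bar>l22\<bar>+M)*(\<bar>a\<bar>+\<bar>b\<bar>)"
    using t1 t2 t3 t4 t5 by (simp add: algebra_simps)
  finally show ?thesis .
qed

lemma comb_plus:
  fixes a b \<tau> \<sigma> mpd lpd :: real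
  assumes E1: "\<bar>mpd - (a*m1 + a*b*m12 + b*m2 + b^2/2*m22 + b^3/6*m3)\<bar> \<le> M*(a^2+\<bar>a\<bar>*b^2)"
    and E2: "\<bar>lpd - (a*l1 + a*b*l12 + b*l2 + b^2/2*l22 + b^3/6*l3)\<bar> \<le> M*(a^2+\<bar>a\<bar>*b^2)"
    and m3: "\<bar>m3\<bar> \<le> M" and l3: "\<bar>l3\<bar> \<le> M" and m2: "m2 = t0*l2" and m22: "m22 = t0*l22"
    and a1: "\<bar>a\<bar> \<le> 1" and b1: "\<bar>b\<bar> \<le> 1" and s: "\<bar>\<sigma>\<bar> \<le> S"
    and I: "\<tau>^2*Xp = mpd - t0*lpd - lpd*(\<tau>^2*\<sigma>)"
  shows "\<bar>\<tau>^2*Xp - (m1 - t0*l1)*a\<bar> \<le> (\<bar>m12\<bar> + \<bar>t0\<bar>*\<bar>l12\<bar> + M + \<bar>t0\<bar>*M + (\<bar>l1\<bar>+\<bar>l12\<bar>+\<bar>l2\<bar>+\<bar>l22\<bar>+3*M)*S)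
     * (\<bar>a\<bar>*\<bar>b\<bar> + \<bar>b\<bar>^3 + a^2 + \<bar>a\<bar>*b^2 + \<tau>^2*(\<bar>a\<bar>+\<bar>b\<bar>))"
proof -
  have M: "M \<ge> 0" using m3 by linarith
  have S: "S \<ge> 0" using s by linarith
  define e1 where "e1 = mpd - (a*m1 + a*b*m12 + b*m2 + b^2/2*m22 + b^3/6*m3)"
  define e2 where "e2 = lpd - (a*l1 + a*b*l12 + b*l2 + b^2/2*l22 + b^3/6*l3)"
  define L where "L = \<bar>l1\<bar>+\<bar>l12\<bar>+\<bar>l2\<bar>+\<bar>l22\<bar>+3*M"
  define W where "W = a^2+\<bar>a\<bar>*b^2"
  have W: "W \<ge> 0" by (simp add: W_def)
  have eq: "\<tau>^2*Xp - (m1 - t0*l1)*a = a*b*(m12 - t0*l12) + b^3/6*(m3 - t0*l3) + (e1 - t0*e2) - lpd*(\<tau>^2*\<sigma>)"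
    unfolding I e1_def e2_def m2 m22 by (simp add: field_simps)
  have f1: "\<bar>a*b*(m12 - t0*l12)\<bar> \<le> (\<bar>m12\<bar> + \<bar>t0\<bar>*\<bar>l12\<bar>)*(\<bar>a\<bar>*\<bar>b\<bar>)"
  proof -
    have h: "\<bar>m12 - t0*l12\<bar> \<le> \<bar>m12\<bar> + \<bar>t0\<bar>*\<bar>l12\<bar>" by (simp add: abs_mult[symmetric] abs_triangle_ineq4)
    have "\<bar>a*b*(m12 - t0*l12)\<bar> = (\<bar>a\<bar>*\<bar>b\<bar>)*\<bar>m12 - t0*l12\<bar>" by (simp add: abs_mult)
    also have "\<dots> \<le> (\<bar>a\<bar>*\<bar>b\<bar>)*(\<bar>m12\<bar> + \<bar>t0\<bar>*\<bar>l12\<bar>)" using h by (intro mult_left_mono) auto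
    finally show ?thesis by (simp add: mult.commute)
  qed
  have f2: "\<bar>b^3/6*(m3 - t0*l3)\<bar> \<le> (M + \<bar>t0\<bar>*M)*\<bar>b\<bar>^3"
  proof -
    have "\<bar>m3 - t0*l3\<bar> \<le> \<bar>m3\<bar> + \<bar>t0\<bar>*\<bar>l3\<bar>" by (simp add: abs_mult[symmetric] abs_triangle_ineq4)
    also have "\<dots> \<le> M + \<bar>t0\<bar>*M" using m3 l3 by (intro add_mono mult_left_mono) auto
    finally have h: "\<bar>m3 - t0*l3\<bar> \<le> M + \<bar>t0\<bar>*M" .
    have "\<bar>b^3/6*(m3 - t0*l3)\<bar> = \<bar>b\<bar>^3/6*\<bar>m3 - t0*l3\<bar>" by (simp add: abs_mult power_abs)
    also have "\<dots> \<le> \<bar>b\<bar>^3*(M + \<bar>t0\<bar>*M)" using h by (intro mult_mono) auto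
    finally show ?thesis by (simp add: mult.commute)
  qed
  have f3: "\<bar>e1 - t0*e2\<bar> \<le> (M + \<bar>t0\<bar>*M)*W"
  proof -
    have "\<bar>e1 - t0*e2\<bar> \<le> \<bar>e1\<bar> + \<bar>t0\<bar>*\<bar>e2\<bar>" by (simp add: abs_mult[symmetric] abs_triangle_ineq4)
    also have "\<dots> \<le> M*W + \<bar>t0\<bar>*(M*W)" using E1 E2 unfolding e1_def e2_def W_def by (intro add_mono mult_left_mono) auto
    finally show ?thesis by (simp add: algebra_simps)
  qed
  have lp: "\<bar>lpd\<bar> \<le> L*(\<bar>a\<bar>+\<bar>b\<bar>)"
  proof -
    have "lpd = (a*l1 + a*b*l12 + b*l2 + b^2/2*l22 + b^3/6*l3) + e2" unfolding e2_def by simp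
    then have h1: "\<bar>lpd\<bar> \<le> \<bar>a*l1 + a*b*l12 + b*l2 + b^2/2*l22 + b^3/6*l3\<bar> + \<bar>e2\<bar>" by (metis abs_triangle_ineq)
    have "\<bar>e2\<bar> \<le> M*W" using E2 by (simp add: e2_def W_def)
    also have "W \<le> 2*(\<bar>a\<bar>+\<bar>b\<bar>)"
    proof -
      have "a^2 \<le> \<bar>a\<bar>" using sq_le1 a1 by blast
      moreover have "\<bar>a\<bar>*b^2 \<le> \<bar>a\<bar>" using sq_le1[OF b1] b1 by (simp add: mult_left_le power_le_one)
      ultimately show ?thesis by (simp add: W_def)
    qed
    then have "M*W \<le> M*(2*(\<bar>a\<bar>+\<bar>b\<bar>))" using M by (intro mult_left_mono) auto
    finally have h2: "\<bar>e2\<bar> \<le> M*(2*(\<bar>a\<bar>+\<bar>b\<bar>))" .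
    have h3: "\<bar>a*l1 + a*b*l12 + b*l2 + b^2/2*l22 + b^3/6*l3\<bar> \<le> (\<bar>l1\<bar>+\<bar>l12\<bar>+\<bar>l2\<bar>+\<bar>l22\<bar>+M)*(\<bar>a\<bar>+\<bar>b\<bar>)"
      using taylor_poly_bound[OF a1 b1 l3, of l1 l12 l2 l22] .
    have "\<bar>lpd\<bar> \<le> (\<bar>l1\<bar>+\<bar>l12\<bar>+\<bar>l2\<bar>+\<bar>l22\<bar>+M)*(\<bar>a\<bar>+\<bar>b\<bar>) + M*(2*(\<bar>a\<bar>+\<bar>b\<bar>))"
      using h1 h2 h3 by linarith
    then show ?thesis by (simp add: L_def algebra_simps)
  qed
  have f4: "\<bar>lpd*(\<tau>^2*\<sigma>)\<bar> \<le> (L*S)*(\<tau>^2*(\<bar>a\<bar>+\<bar>b\<bar>))"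
  proof -
    have "\<bar>lpd*(\<tau>^2*\<sigma>)\<bar> = \<bar>lpd\<bar>*(\<tau>^2*\<bar>\<sigma>\<bar>)" by (simp add: abs_mult)
    also have "\<dots> \<le> (L*(\<bar>a\<bar>+\<bar>b\<bar>))*(\<tau>^2*S)" using lp s by (intro mult_mono mult_left_mono) auto
    finally show ?thesis by (simp add: mult_ac)
  qed
  define Z where "Z = \<bar>a\<bar>*\<bar>b\<bar> + \<bar>b\<bar>^3 + a^2 + \<bar>a\<bar>*b^2 + \<tau>^2*(\<bar>a\<bar>+\<bar>b\<bar>)"
  have L0: "L \<ge> 0" using M by (simp add: L_def)
  have "\<bar>\<tau>^2*Xp - (m1 - t0*l1)*a\<bar> \<le> (\<bar>m12\<bar> + \<bar>t0\<bar>*\<bar>l12\<bar>)*(\<bar>a\<bar>*\<bar>b\<bar>) + (M + \<bar>t0\<bar>*M)*\<bar>b\<bar>^3 + (M + \<bar>t0\<bar>*M)*W + (L*S)*(\<tau>^2*(\<bar>a\<bar>+\<bar>b\<bar>))"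
    unfolding eq by (rule order_trans[OF abs_pm4], intro add_mono f1 f2 f3 f4)
  also have "\<dots> \<le> (\<bar>m12\<bar> + \<bar>t0\<bar>*\<bar>l12\<bar> + M + \<bar>t0\<bar>*M + L*S) * Z"
  proof -
    have z1: "\<bar>a\<bar>*\<bar>b\<bar> \<le> Z" "\<bar>b\<bar>^3 \<le> Z" "W \<le> Z" "\<tau>^2*(\<bar>a\<bar>+\<bar>b\<bar>) \<le> Z"
      by (auto simp: Z_def W_def)
    have c0: "\<bar>m12\<bar> + \<bar>t0\<bar>*\<bar>l12\<bar> \<ge> 0" "M + \<bar>t0\<bar>*M \<ge> 0" "L*S \<ge> 0" using M L0 S by auto
    have "(\<bar>m12\<bar> + \<bar>t0\<bar>*\<bar>l12\<bar>)*(\<bar>a\<bar>*\<bar>b\<bar>) \<le> (\<bar>m12\<bar> + \<bar>t0\<bar>*\<bar>l12\<bar>)*Z" using z1 c0 by (intro mult_left_mono) auto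
    moreover have "(M + \<bar>t0\<bar>*M)*\<bar>b\<bar>^3 + (M + \<bar>t0\<bar>*M)*W \<le> (M + \<bar>t0\<bar>*M)*Z"
    proof -
      have "\<bar>b\<bar>^3 + W \<le> Z" by (auto simp: Z_def W_def)
      then have "(M + \<bar>t0\<bar>*M)*(\<bar>b\<bar>^3 + W) \<le> (M + \<bar>t0\<bar>*M)*Z" using c0 by (intro mult_left_mono) auto
      then show ?thesis by (simp add: algebra_simps)
    qed
    moreover have "(L*S)*(\<tau>^2*(\<bar>a\<bar>+\<bar>b\<bar>)) \<le> (L*S)*Z" using z1 c0 by (intro mult_left_mono) auto
    ultimately show ?thesis by (simp add: algebra_simps)
  qed
  finally show ?thesis by (simp add: Z_def L_def)
qed

lemma comb_minus:
  fixes a b \<tau> \<sigma> mmd lmd :: real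
  assumes E1: "\<bar>mmd - (a*n1 + a*b*n12 + b*n2 + b^2/2*n22 + b^3/6*n3)\<bar> \<le> M*(a^2+\<bar>a\<bar>*b^2)"
    and E2: "\<bar>lmd - (a*k1 + a*b*k12 + b*k2 + b^2/2*k22 + b^3/6*k3)\<bar> \<le> M*(a^2+\<bar>a\<bar>*b^2)"
    and k3: "\<bar>k3\<bar> \<le> M" and n1: "n1 = t0*k1" and n12: "n12 = t0*k12" and n2: "n2 = t0*k2" and n22: "n22 = t0*k22"
    and a1: "\<bar>a\<bar> \<le> 1" and b1: "\<bar>b\<bar> \<le> 1" and s: "\<bar>\<sigma>\<bar> \<le> S"
    and g: "\<bar>n3 - t0*k3 + \<gamma>\<bar> \<le> 6*\<epsilon>"
    and I: "\<tau>^3*Xm = mmd - t0*lmd - lmd*(\<tau>^2*\<sigma>)"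
  shows "\<bar>\<tau>^3*Xm - (-\<gamma>/6*b^3 - k2*b*\<tau>^2*\<sigma>)\<bar> \<le> \<epsilon>*\<bar>b\<bar>^3 +
     ((1+\<bar>t0\<bar>)*M + (\<bar>k1\<bar>+\<bar>k12\<bar>+\<bar>k22\<bar>+3*M)*S)*(a^2 + \<bar>a\<bar>*b^2 + \<tau>^2*(\<bar>a\<bar> + b^2))"
proof -
  have M: "M \<ge> 0" using k3 by linarith
  have S: "S \<ge> 0" using s by linarith
  define e1 where "e1 = mmd - (a*n1 + a*b*n12 + b*n2 + b^2/2*n22 + b^3/6*n3)"
  define e2 where "e2 = lmd - (a*k1 + a*b*k12 + b*k2 + b^2/2*k22 + b^3/6*k3)"
  define L where "L = \<bar>k1\<bar>+\<bar>k12\<bar>+\<bar>k22\<bar>+3*M"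
  define W where "W = a^2+\<bar>a\<bar>*b^2"
  have eq: "\<tau>^3*Xm - (-\<gamma>/6*b^3 - k2*b*\<tau>^2*\<sigma>) = b^3/6*(n3 - t0*k3 + \<gamma>) + (e1 - t0*e2) - (lmd - k2*b)*(\<tau>^2*\<sigma>)"
    unfolding I e1_def e2_def n1 n12 n2 n22 by (simp add: field_simps)
  have f1: "\<bar>b^3/6*(n3 - t0*k3 + \<gamma>)\<bar> \<le> \<epsilon>*\<bar>b\<bar>^3"
  proof -
    have "\<bar>b^3/6*(n3 - t0*k3 + \<gamma>)\<bar> = \<bar>b\<bar>^3*(\<bar>n3 - t0*k3 + \<gamma>\<bar>/6)" by (simp add: abs_mult power_abs)
    also have "\<dots> \<le> \<bar>b\<bar>^3*\<epsilon>" using g by (intro mult_left_mono) auto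
    finally show ?thesis by (simp add: mult.commute)
  qed
  have f3: "\<bar>e1 - t0*e2\<bar> \<le> (1+\<bar>t0\<bar>)*M*W"
  proof -
    have "\<bar>e1 - t0*e2\<bar> \<le> \<bar>e1\<bar> + \<bar>t0\<bar>*\<bar>e2\<bar>" by (simp add: abs_mult[symmetric] abs_triangle_ineq4)
    also have "\<dots> \<le> M*W + \<bar>t0\<bar>*(M*W)" using E1 E2 unfolding e1_def e2_def W_def by (intro add_mono mult_left_mono) auto
    finally show ?thesis by (simp add: algebra_simps)
  qed
  have lm: "\<bar>lmd - k2*b\<bar> \<le> L*(\<bar>a\<bar> + b^2)"
  proof -
    have ab: "\<bar>a\<bar>*\<bar>b\<bar> \<le> \<bar>a\<bar>" using ab_le1 a1 b1 by blast
    have b3: "\<bar>b\<bar>^3 \<le> b^2" using cube_le1 b1 by blast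
    have a2: "a^2 \<le> \<bar>a\<bar>" using sq_le1 a1 by blast
    have ab2: "\<bar>a\<bar>*b^2 \<le> \<bar>a\<bar>" using sq_le1[OF b1] b1 by (simp add: mult_left_le power_le_one)
    have "\<bar>lmd - k2*b\<bar> \<le> \<bar>a*k1\<bar> + \<bar>a*b*k12\<bar> + \<bar>b^2/2*k22\<bar> + \<bar>b^3/6*k3\<bar> + \<bar>e2\<bar>"
    proof -
      have "lmd - k2*b = a*k1 + a*b*k12 + b^2/2*k22 + b^3/6*k3 + e2" unfolding e2_def by (simp add: algebra_simps)
      then show ?thesis using abs5[of "a*k1" "a*b*k12" "b^2/2*k22" "b^3/6*k3" e2] by simp
    qed
    also have "\<bar>a*k1\<bar> = \<bar>k1\<bar>*\<bar>a\<bar>" by (simp add: abs_mult)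
    also have "\<bar>a*b*k12\<bar> \<le> \<bar>k12\<bar>*\<bar>a\<bar>"
    proof -
      have "\<bar>a*b*k12\<bar> = \<bar>k12\<bar>*(\<bar>a\<bar>*\<bar>b\<bar>)" by (simp add: abs_mult mult_ac)
      also have "\<dots> \<le> \<bar>k12\<bar>*\<bar>a\<bar>" using ab by (intro mult_left_mono) auto
      finally show ?thesis .
    qed
    also have "\<bar>b^2/2*k22\<bar> \<le> \<bar>k22\<bar>*b^2" by (simp add: abs_mult mult.commute mult_left_mono)
    also have "\<bar>b^3/6*k3\<bar> \<le> M*b^2"
    proof -
      have "\<bar>b^3/6*k3\<bar> = \<bar>k3\<bar>*(\<bar>b\<bar>^3/6)" by (simp add: abs_mult power_abs mult_ac)
      also have "\<dots> \<le> M*b^2"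
      proof -
        have "\<bar>b\<bar>^3/6 \<le> b^2" using b3 zero_le_power2[of b] by linarith
        then show ?thesis using k3 by (intro mult_mono) auto
      qed
      finally show ?thesis .
    qed
    also have "\<bar>e2\<bar> \<le> M*(2*\<bar>a\<bar>)"
    proof -
      have "\<bar>e2\<bar> \<le> M*W" using E2 by (simp add: e2_def W_def)
      also have "\<dots> \<le> M*(2*\<bar>a\<bar>)" using a2 ab2 M by (intro mult_left_mono) (auto simp: W_def)
      finally show ?thesis .
    qed
    finally have "\<bar>lmd - k2*b\<bar> \<le> \<bar>k1\<bar>*\<bar>a\<bar> + \<bar>k12\<bar>*\<bar>a\<bar> + \<bar>k22\<bar>*b^2 + M*b^2 + M*(2*\<bar>a\<bar>)" by simp
    also have "\<dots> \<le> L*(\<bar>a\<bar> + b^2)" using M by (simp add: L_def algebra_simps)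
    finally show ?thesis .
  qed
  have f4: "\<bar>(lmd - k2*b)*(\<tau>^2*\<sigma>)\<bar> \<le> (L*S)*(\<tau>^2*(\<bar>a\<bar>+b^2))"
  proof -
    have "\<bar>(lmd - k2*b)*(\<tau>^2*\<sigma>)\<bar> = \<bar>lmd - k2*b\<bar>*(\<tau>^2*\<bar>\<sigma>\<bar>)" by (simp add: abs_mult)
    also have "\<dots> \<le> (L*(\<bar>a\<bar>+b^2))*(\<tau>^2*S)" using lm s by (intro mult_mono mult_left_mono) auto
    finally show ?thesis by (simp add: mult_ac)
  qed
  have L0: "L \<ge> 0" using M by (simp add: L_def)
  have "\<bar>\<tau>^3*Xm - (-\<gamma>/6*b^3 - k2*b*\<tau>^2*\<sigma>)\<bar> \<le> \<epsilon>*\<bar>b\<bar>^3 + (1+\<bar>t0\<bar>)*M*W + (L*S)*(\<tau>^2*(\<bar>a\<bar>+b^2))"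
    unfolding eq by (rule order_trans[OF abs_pm3], intro add_mono f1 f3 f4)
  also have "\<dots> \<le> \<epsilon>*\<bar>b\<bar>^3 + ((1+\<bar>t0\<bar>)*M + L*S)*(W + \<tau>^2*(\<bar>a\<bar> + b^2))"
  proof -
    have c: "(1+\<bar>t0\<bar>)*M \<ge> 0" "L*S \<ge> 0" using M L0 S by auto
    have "W \<ge> 0" "\<tau>^2*(\<bar>a\<bar> + b^2) \<ge> 0" by (auto simp: W_def)
    then have "(1+\<bar>t0\<bar>)*M*W \<le> (1+\<bar>t0\<bar>)*M*(W + \<tau>^2*(\<bar>a\<bar> + b^2))"
       "(L*S)*(\<tau>^2*(\<bar>a\<bar>+b^2)) \<le> (L*S)*(W + \<tau>^2*(\<bar>a\<bar> + b^2))"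
      using c by (auto intro!: mult_left_mono)
    then show ?thesis by (simp add: algebra_simps)
  qed
  finally show ?thesis by (simp add: W_def L_def add.assoc)
qed


lemma smooth_expand:
  assumes sm: "smooth_on V f"
    and box: "\<And>x y. \<bar>x-p\<bar> < \<eta> \<Longrightarrow> \<bar>y-q\<bar> < \<eta> \<Longrightarrow> (x,y) \<in> V \<and> \<bar>pd1 (pd1 f) x y\<bar> \<le> M \<and> \<bar>pd2 (pd2 (pd1 f)) x y\<bar> \<le> M"
    and ab: "\<bar>a\<bar> < \<eta>" "\<bar>b\<bar> < \<eta>"
  shows "\<exists>\<theta>. \<bar>\<theta>\<bar> \<le> \<bar>b\<bar> \<and> \<bar>f (p+a) (q+b) - f p q - (a*pd1 f p q + a*b*pd2 (pd1 f) p q + b*pd2 f p q + b^2/2*pd2 (pd2 f) p q + b^3/6*pd2 (pd2 (pd2 f)) p (q+\<theta>))\<bar> \<le> M*(a^2+\<bar>a\<bar>*b^2)"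
proof (rule expand2[where G=f and Gx="pd1 f" and Gxx="pd1 (pd1 f)" and Gxy="pd2 (pd1 f)" and Gxyy="pd2 (pd2 (pd1 f))"
      and Gy="pd2 f" and Gyy="pd2 (pd2 f)" and Gyyy="pd2 (pd2 (pd2 f))" and \<eta>=\<eta>, OF ab])
  fix x y assume xy: "\<bar>x-p\<bar> < \<eta>" "\<bar>y-q\<bar> < \<eta>"
  then have V: "(x,y) \<in> V" using box by blast
  show "((\<lambda>x. f x y) has_real_derivative pd1 f x y) (at x)" using sm_d1[OF sm V, of "[]"] by simp
  show "((\<lambda>x. pd1 f x y) has_real_derivative pd1 (pd1 f) x y) (at x)" using sm_d1[OF sm V, of "[False]"] by simp
  show "((\<lambda>y. pd1 f x y) has_real_derivative pd2 (pd1 f) x y) (at y)" using sm_d2[OF sm V, of "[False]"] by simp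
  show "((\<lambda>y. pd2 (pd1 f) x y) has_real_derivative pd2 (pd2 (pd1 f)) x y) (at y)" using sm_d2[OF sm V, of "[True,False]"] by simp
  show "((\<lambda>y. f x y) has_real_derivative pd2 f x y) (at y)" using sm_d2[OF sm V, of "[]"] by simp
  show "((\<lambda>y. pd2 f x y) has_real_derivative pd2 (pd2 f) x y) (at y)" using sm_d2[OF sm V, of "[True]"] by simp
  show "((\<lambda>y. pd2 (pd2 f) x y) has_real_derivative pd2 (pd2 (pd2 f)) x y) (at y)" using sm_d2[OF sm V, of "[True,True]"] by simp
  show "\<bar>pd1 (pd1 f) x y\<bar> \<le> M \<and> \<bar>pd2 (pd2 (pd1 f)) x y\<bar> \<le> M" using box xy by blast
qed

lemma powr_third:
  fixes k :: real
  assumes "k > 0"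
  shows "(k powr (1/3))^2 = k powr (2/3)" "(k powr (1/3))^3 = k" "k powr (-2/3) = 1/(k powr (1/3))^2"
    "k powr (-1/3) = 1/(k powr (1/3))"
proof -
  have p: "(k powr (1/3))^n = k powr (real n/3)" for n :: nat
    using assms by (simp add: powr_realpow[symmetric] powr_powr)
  show "(k powr (1/3))^2 = k powr (2/3)" using p[of 2] by simp
  show "(k powr (1/3))^3 = k" using p[of 3] assms by simp
  show "k powr (-2/3) = 1/(k powr (1/3))^2" using p[of 2] by (simp add: powr_minus_divide[symmetric])
  show "k powr (-1/3) = 1/(k powr (1/3))" by (simp add: powr_minus_divide[symmetric])
qed

lemma filterlim_cuberoot: "filterlim (\<lambda>k::real. k powr (1/3)) (at_right 0) (at_right 0)"
proof -
  have "((\<lambda>k::real. k powr (1/3)) \<longlongrightarrow> 0) (at_right 0)"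
    by (rule tendsto_zero_powrI) (auto simp: eventually_at_right_field intro: tendsto_ident_at exI[of _ 1])
  moreover have "eventually (\<lambda>k::real. k powr (1/3) \<in> {0<..}) (at_right 0)"
    unfolding eventually_at_right_field by (auto intro: exI[of _ 1])
  ultimately show ?thesis unfolding filterlim_at by (auto elim: eventually_mono)
qed

lemma klim:
  fixes f g :: "real \<Rightarrow> real"
  assumes f: "(f \<longlongrightarrow> L) (at_right 0)" and S: "S \<subseteq> {0<..}"
    and g: "\<And>k. k > 0 \<Longrightarrow> g k = f (k powr (1/3))"
  shows "(g \<longlongrightarrow> L) (at 0 within S)"
proof -
  have "((\<lambda>k. f (k powr (1/3))) \<longlongrightarrow> L) (at_right 0)"
    by (rule filterlim_compose[OF f filterlim_cuberoot])
  moreover have "eventually (\<lambda>k. f (k powr (1/3)) = g k) (at_right 0)"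
    unfolding eventually_at_right_field using g by (auto intro: exI[of _ 1])
  ultimately have "(g \<longlongrightarrow> L) (at_right 0)" by (rule Lim_transform_eventually)
  then show ?thesis using S by (rule tendsto_within_subset)
qed


lemma ident_alg:
  fixes xx P tt Mv x0 P0 t0 M0 sv X :: real
  assumes "xx + P*tt = Mv" "x0 + P0*t0 = M0" "tt = t0 + sv" "xx = x0 + X - P0* sv"
  shows "X = (Mv - M0) - t0*(P - P0) - (P - P0)* sv"
proof -
  have "Mv - M0 = xx + P*tt - (x0 + P0*t0)" using assms(1,2) by simp
  also have "\<dots> = X + t0*(P - P0) + (P - P0)* sv" unfolding assms(3,4) by (simp add: algebra_simps)
  finally show ?thesis by simp
qed

lemma comb_plus_ex:
  fixes a b \<tau> \<sigma> mpd lpd :: real and m3 l3 :: "real \<Rightarrow> real"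
  assumes E1: "\<exists>\<theta>. \<bar>\<theta>\<bar> \<le> \<bar>b\<bar> \<and> \<bar>mpd - (a*m1 + a*b*m12 + b*m2 + b^2/2*m22 + b^3/6*m3 \<theta>)\<bar> \<le> M*(a^2+\<bar>a\<bar>*b^2)"
    and E2: "\<exists>\<theta>. \<bar>\<theta>\<bar> \<le> \<bar>b\<bar> \<and> \<bar>lpd - (a*l1 + a*b*l12 + b*l2 + b^2/2*l22 + b^3/6*l3 \<theta>)\<bar> \<le> M*(a^2+\<bar>a\<bar>*b^2)"
    and m3: "\<And>\<theta>. \<bar>\<theta>\<bar> \<le> \<bar>b\<bar> \<Longrightarrow> \<bar>m3 \<theta>\<bar> \<le> M" and l3: "\<And>\<theta>. \<bar>\<theta>\<bar> \<le> \<bar>b\<bar> \<Longrightarrow> \<bar>l3 \<theta>\<bar> \<le> M"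
    and m2: "m2 = t0*l2" and m22: "m22 = t0*l22"
    and a1: "\<bar>a\<bar> \<le> 1" and b1: "\<bar>b\<bar> \<le> 1" and s: "\<bar>\<sigma>\<bar> \<le> S"
    and I: "\<tau>^2*Xp = mpd - t0*lpd - lpd*(\<tau>^2*\<sigma>)"
    and \<alpha>: "\<alpha> = m1 - t0*l1"
    and K: "K = \<bar>m12\<bar> + \<bar>t0\<bar>*\<bar>l12\<bar> + M + \<bar>t0\<bar>*M + (\<bar>l1\<bar>+\<bar>l12\<bar>+\<bar>l2\<bar>+\<bar>l22\<bar>+3*M)*S"
  shows "\<bar>\<tau>^2*Xp - \<alpha>*a\<bar> \<le> K*(\<bar>a\<bar>*\<bar>b\<bar> + \<bar>b\<bar>^3 + a^2 + \<bar>a\<bar>*b^2 + \<tau>^2*(\<bar>a\<bar>+\<bar>b\<bar>))"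
proof -
  from E1 obtain \<theta>1 where t1: "\<bar>\<theta>1\<bar> \<le> \<bar>b\<bar>" "\<bar>mpd - (a*m1 + a*b*m12 + b*m2 + b^2/2*m22 + b^3/6*m3 \<theta>1)\<bar> \<le> M*(a^2+\<bar>a\<bar>*b^2)" by blast
  from E2 obtain \<theta>2 where t2: "\<bar>\<theta>2\<bar> \<le> \<bar>b\<bar>" "\<bar>lpd - (a*l1 + a*b*l12 + b*l2 + b^2/2*l22 + b^3/6*l3 \<theta>2)\<bar> \<le> M*(a^2+\<bar>a\<bar>*b^2)" by blast
  show ?thesis unfolding \<alpha> K
    by (rule comb_plus[OF t1(2) t2(2) m3[OF t1(1)] l3[OF t2(1)] m2 m22 a1 b1 s I])
qed

lemma comb_minus_ex:
  fixes a b \<tau> \<sigma> mmd lmd :: real and n3 k3 :: "real \<Rightarrow> real"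
  assumes E1: "\<exists>\<theta>. \<bar>\<theta>\<bar> \<le> \<bar>b\<bar> \<and> \<bar>mmd - (a*n1 + a*b*n12 + b*n2 + b^2/2*n22 + b^3/6*n3 \<theta>)\<bar> \<le> M*(a^2+\<bar>a\<bar>*b^2)"
    and E2: "\<exists>\<theta>. \<bar>\<theta>\<bar> \<le> \<bar>b\<bar> \<and> \<bar>lmd - (a*k1 + a*b*k12 + b*k2 + b^2/2*k22 + b^3/6*k3 \<theta>)\<bar> \<le> M*(a^2+\<bar>a\<bar>*b^2)"
    and k3: "\<And>\<theta>. \<bar>\<theta>\<bar> \<le> \<bar>b\<bar> \<Longrightarrow> \<bar>k3 \<theta>\<bar> \<le> M"
    and n1: "n1 = t0*k1" and n12: "n12 = t0*k12" and n2: "n2 = t0*k2" and n22: "n22 = t0*k22"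
    and a1: "\<bar>a\<bar> \<le> 1" and b1: "\<bar>b\<bar> \<le> 1" and s: "\<bar>\<sigma>\<bar> \<le> S"
    and g: "\<And>\<theta>1 \<theta>2. \<bar>\<theta>1\<bar> \<le> \<bar>b\<bar> \<Longrightarrow> \<bar>\<theta>2\<bar> \<le> \<bar>b\<bar> \<Longrightarrow> \<bar>n3 \<theta>1 - t0*k3 \<theta>2 + \<gamma>\<bar> \<le> 6*\<epsilon>"
    and I: "\<tau>^3*Xm = mmd - t0*lmd - lmd*(\<tau>^2*\<sigma>)"
    and K: "K = (1+\<bar>t0\<bar>)*M + (\<bar>k1\<bar>+\<bar>k12\<bar>+\<bar>k22\<bar>+3*M)*S"
  shows "\<bar>\<tau>^3*Xm - (-\<gamma>/6*b^3 - k2*b*\<tau>^2*\<sigma>)\<bar> \<le> \<epsilon>*\<bar>b\<bar>^3 + K*(a^2 + \<bar>a\<bar>*b^2 + \<tau>^2*(\<bar>a\<bar> + b^2))"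
proof -
  from E1 obtain \<theta>1 where t1: "\<bar>\<theta>1\<bar> \<le> \<bar>b\<bar>" "\<bar>mmd - (a*n1 + a*b*n12 + b*n2 + b^2/2*n22 + b^3/6*n3 \<theta>1)\<bar> \<le> M*(a^2+\<bar>a\<bar>*b^2)" by blast
  from E2 obtain \<theta>2 where t2: "\<bar>\<theta>2\<bar> \<le> \<bar>b\<bar>" "\<bar>lmd - (a*k1 + a*b*k12 + b*k2 + b^2/2*k22 + b^3/6*k3 \<theta>2)\<bar> \<le> M*(a^2+\<bar>a\<bar>*b^2)" by blast
  show ?thesis unfolding K
    by (rule comb_minus[OF t1(2) t2(2) k3[OF t2(1)] n1 n12 n2 n22 a1 b1 s g[OF t1(1) t2(1)] I])
qed


theorem mainTheorem2:
  fixes h Rp Rm kp km :: "real \<Rightarrow> real \<Rightarrow> real"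
    and U :: "(real \<times> real) set"
    and lp lm mp mm :: "real \<Rightarrow> real \<Rightarrow> real"
    and u v rP rM :: "real \<Rightarrow> real \<Rightarrow> real"
    and x0 t0 \<delta> r0p r0m :: real
  defines "V \<equiv> (\<lambda>p. (Rp (fst p) (snd p), Rm (fst p) (snd p))) ` U"
    and "D \<equiv> {p. dist p (x0, t0) < \<delta> \<and> snd p < t0}"
  assumes U_open: "open U"
    and h_smooth: "smooth_on U h"
    and h_hyp: "\<forall>(a, b)\<in>U. pd1 (pd1 h) a b * pd2 (pd2 h) a b > 0"
    \<comment> \<open>Riemann invariants and integrating factors\<close>
    and R_smooth: "smooth_on U Rp" "smooth_on U Rm"
    and R_inj: "inj_on (\<lambda>p. (Rp (fst p) (snd p), Rm (fst p) (snd p))) U"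
    and R_grad: "\<forall>(a, b)\<in>U. kp a b \<noteq> 0 \<and> km a b \<noteq> 0 \<and>
        pd1 Rp a b = kp a b * sqrt (pd1 (pd1 h) a b) \<and>
        pd2 Rp a b = kp a b * sqrt (pd2 (pd2 h) a b) \<and>
        pd1 Rm a b = km a b * (- sqrt (pd1 (pd1 h) a b)) \<and>
        pd2 Rm a b = km a b * sqrt (pd2 (pd2 h) a b)"
    \<comment> \<open>characteristic speeds as functions of the Riemann invariants\<close>
    and lam_def: "\<forall>(a, b)\<in>U.
        lp (Rp a b) (Rm a b) = pd1 (pd2 h) a b + sqrt (pd1 (pd1 h) a b * pd2 (pd2 h) a b) \<and>
        lm (Rp a b) (Rm a b) = pd1 (pd2 h) a b - sqrt (pd1 (pd1 h) a b * pd2 (pd2 h) a b)"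
    and lam_smooth: "smooth_on V lp" "smooth_on V lm"
    \<comment> \<open>hodograph functions\<close>
    and mu_smooth: "smooth_on V mp" "smooth_on V mm"
    and mu_eqs: "\<forall>(a, b)\<in>V.
        pd2 mp a b = (mp a b - mm a b) / (lp a b - lm a b) * pd2 lp a b \<and>
        pd1 mm a b = (mp a b - mm a b) / (lp a b - lm a b) * pd1 lm a b"
    \<comment> \<open>the solution for t < t0 near (x0,t0)\<close>
    and delta_pos: "\<delta> > 0"
    and uv_smooth: "smooth_on D u" "smooth_on D v"
    and uv_in: "\<forall>(x, t)\<in>D. (u x t, v x t) \<in> U"
    and system: "\<forall>(x, t)\<in>D.
        pd2 u x t = pd1 (pd2 h) (u x t) (v x t) * pd1 u x t + pd2 (pd2 h) (u x t) (v x t) * pd1 v x t \<and>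
        pd2 v x t = pd1 (pd1 h) (u x t) (v x t) * pd1 u x t + pd1 (pd2 h) (u x t) (v x t) * pd1 v x t"
    and r_def: "\<forall>(x, t)\<in>D. rP x t = Rp (u x t) (v x t) \<and> rM x t = Rm (u x t) (v x t)"
    and hodograph: "\<forall>(x, t)\<in>D.
        x + lp (rP x t) (rM x t) * t = mp (rP x t) (rM x t) \<and>
        x + lm (rP x t) (rM x t) * t = mm (rP x t) (rM x t)"
    \<comment> \<open>limiting values at the catastrophe point\<close>
    and r0_in: "(r0p, r0m) \<in> V"
    and r_lim: "((\<lambda>p. rP (fst p) (snd p)) \<longlongrightarrow> r0p) (at (x0, t0) within D)"
               "((\<lambda>p. rM (fst p) (snd p)) \<longlongrightarrow> r0m) (at (x0, t0) within D)"
    \<comment> \<open>gradient catastrophe of r_-\<close>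
    and blowup: "filterlim (\<lambda>p. \<bar>pd1 rM (fst p) (snd p)\<bar>) at_top (at (x0, t0) within D)"
    and bounded: "\<exists>B. eventually (\<lambda>p. \<bar>pd1 rP (fst p) (snd p)\<bar> \<le> B) (at (x0, t0) within D)"
    and cat1: "pd2 mm r0p r0m - t0 * pd2 lm r0p r0m = 0"
    and cat2: "pd2 (pd2 mm) r0p r0m - t0 * pd2 (pd2 lm) r0p r0m = 0"
    \<comment> \<open>genericity\<close>
    and gen1: "pd2 lm r0p r0m \<noteq> 0"
    and gen2: "pd1 mp r0p r0m - t0 * pd1 lp r0p r0m \<noteq> 0"
    and gen3: "pd2 (pd2 (pd2 mm)) r0p r0m - t0 * pd2 (pd2 (pd2 lm)) r0p r0m \<noteq> 0"
  shows "\<exists>\<epsilon>>0. \<forall>Xp Xm. \<bar>Xp\<bar> < \<epsilon> \<and> \<bar>Xm\<bar> < \<epsilon> \<and>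
            (Xp - Xm) / (lp r0p r0m - lm r0p r0m) < 0 \<longrightarrow>
          (let lp0 = lp r0p r0m; lm0 = lm r0p r0m;
               \<alpha> = pd1 mp r0p r0m - t0 * pd1 lp r0p r0m;
               \<beta> = - pd2 lm r0p r0m / (lp0 - lm0);
               \<gamma> = - pd2 (pd2 (pd2 mm)) r0p r0m + t0 * pd2 (pd2 (pd2 lm)) r0p r0m;
               F = at 0 within {k. 0 < k \<and> (k powr (2/3) * Xp - k * Xm) / (lp0 - lm0) < 0}
           in \<exists>RP RM.
             ((\<lambda>k. k powr (-2/3) *
                 (rP (x_of lp0 lm0 x0 t0 (k powr (2/3) * Xp) (k * Xm))
                     (t_of lp0 lm0 t0 (k powr (2/3) * Xp) (k * Xm)) - r0p)) \<longlongrightarrow> RP) F \<and>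
             ((\<lambda>k. k powr (-1/3) *
                 (rM (x_of lp0 lm0 x0 t0 (k powr (2/3) * Xp) (k * Xm))
                     (t_of lp0 lm0 t0 (k powr (2/3) * Xp) (k * Xm)) - r0m)) \<longlongrightarrow> RM) F \<and>
             Xp = \<alpha> * RP \<and>
             Xm = \<beta> * Xp * RM - \<gamma> * RM ^ 3 / 6)"

proof -
  have hod: "\<And>x t. (x,t) \<in> D \<Longrightarrow> x + lp (rP x t) (rM x t) * t = mp (rP x t) (rM x t) \<and> x + lm (rP x t) (rM x t) * t = mm (rP x t) (rM x t)"
    using hodograph by auto
  have rdef: "\<And>x t. (x,t) \<in> D \<Longrightarrow> rP x t = Rp (u x t) (v x t) \<and> rM x t = Rm (u x t) (v x t)"
    using r_def by auto
  have uvU: "\<And>x t. (x,t) \<in> D \<Longrightarrow> (u x t, v x t) \<in> U" using uv_in by auto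
  define R where "R = (\<lambda>p::real\<times>real. (Rp (fst p) (snd p), Rm (fst p) (snd p)))"
  have contR: "continuous_on U R" unfolding R_def
    using sm_cont_on[OF R_smooth(1)] sm_cont_on[OF R_smooth(2)] by (intro continuous_on_Pair)
  have VR: "V = R ` U" by (simp add: V_def R_def)
  have Vopen: "open V" unfolding VR
    by (rule invariance_of_domain[OF contR U_open]) (use R_inj in \<open>simp add: R_def\<close>)
  define r0 where "r0 = (r0p, r0m)"
  have r0V: "r0 \<in> V" using r0_in by (simp add: r0_def)
  obtain eV where eV: "eV > 0" "ball r0 eV \<subseteq> V" using Vopen r0V unfolding open_contains_ball by blast
  define lp0 where "lp0 = lp r0p r0m"
  define lm0 where "lm0 = lm r0p r0m"
  define \<Delta> where "\<Delta> = lp0 - lm0"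
  have Dpos: "\<Delta> > 0"
  proof -
    from r0_in obtain a0 b0 where ab0: "(a0,b0) \<in> U" "r0p = Rp a0 b0" "r0m = Rm a0 b0" unfolding V_def by auto
    have "pd1 (pd1 h) a0 b0 * pd2 (pd2 h) a0 b0 > 0" using h_hyp ab0(1) by auto
    then have "sqrt (pd1 (pd1 h) a0 b0 * pd2 (pd2 h) a0 b0) > 0" by simp
    moreover have "\<Delta> = 2 * sqrt (pd1 (pd1 h) a0 b0 * pd2 (pd2 h) a0 b0)"
      using lam_def ab0 by (auto simp: \<Delta>_def lp0_def lm0_def)
    ultimately show ?thesis by simp
  qed
  have isc: "\<And>f ds. smooth_on V f \<Longrightarrow> isCont (\<lambda>q. pds ds f (fst q) (snd q)) r0"
    using sm_cont Vopen r0V by blast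
  define gs where "gs = [\<lambda>q. pds [False,False] mp (fst q) (snd q), \<lambda>q. pds [True,True,False] mp (fst q) (snd q), \<lambda>q. pds [True,True,True] mp (fst q) (snd q),
     \<lambda>q. pds [False,False] mm (fst q) (snd q), \<lambda>q. pds [True,True,False] mm (fst q) (snd q), \<lambda>q. pds [True,True,True] mm (fst q) (snd q),
     \<lambda>q. pds [False,False] lp (fst q) (snd q), \<lambda>q. pds [True,True,False] lp (fst q) (snd q), \<lambda>q. pds [True,True,True] lp (fst q) (snd q),
     \<lambda>q. pds [False,False] lm (fst q) (snd q), \<lambda>q. pds [True,True,False] lm (fst q) (snd q), \<lambda>q. pds [True,True,True] lm (fst q) (snd q)]"
  have "\<forall>g\<in>set gs. isCont g r0" unfolding gs_def by (simp del: pds.simps add: isc lam_smooth mu_smooth)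
  from bound_near[OF this] obtain eB M where eB: "eB > 0" and MB: "\<And>p. dist p r0 < eB \<Longrightarrow> \<forall>g\<in>set gs. \<bar>g p\<bar> \<le> M" by blast
  define \<eta> where "\<eta> = min eV eB / 2"
  have \<eta>: "\<eta> > 0" using eV eB by (simp add: \<eta>_def)
  have boxd: "dist (x,y) r0 < min eV eB" if "\<bar>x - r0p\<bar> < \<eta>" "\<bar>y - r0m\<bar> < \<eta>" for x y
    using dist_pair_le[of x y r0p r0m] that by (simp add: r0_def \<eta>_def)
  have boxV: "(x,y) \<in> V" if "\<bar>x - r0p\<bar> < \<eta>" "\<bar>y - r0m\<bar> < \<eta>" for x y
    using boxd[OF that] eV(2) by (auto simp: dist_commute subset_eq)
  have boxM: "\<bar>pd1 (pd1 f) x y\<bar> \<le> M \<and> \<bar>pd2 (pd2 (pd1 f)) x y\<bar> \<le> M \<and> \<bar>pd2 (pd2 (pd2 f)) x y\<bar> \<le> M"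
    if "f \<in> {mp, mm, lp, lm}" "\<bar>x - r0p\<bar> < \<eta>" "\<bar>y - r0m\<bar> < \<eta>" for f x y
  proof -
    have "\<forall>g\<in>set gs. \<bar>g (x,y)\<bar> \<le> M" using MB boxd[OF that(2,3)] by simp
    then show ?thesis using that(1) unfolding gs_def by auto
  qed
  have M0: "M \<ge> 0" using boxM[of mp r0p r0m] \<eta> by auto
  have expand: "\<exists>\<theta>. \<bar>\<theta>\<bar> \<le> \<bar>b\<bar> \<and> \<bar>f (r0p+a) (r0m+b) - f r0p r0m - (a*pd1 f r0p r0m + a*b*pd2 (pd1 f) r0p r0m + b*pd2 f r0p r0m + b^2/2*pd2 (pd2 f) r0p r0m + b^3/6*pd2 (pd2 (pd2 f)) r0p (r0m+\<theta>))\<bar> \<le> M*(a^2+\<bar>a\<bar>*b^2)"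
    if "f \<in> {mp, mm, lp, lm}" "\<bar>a\<bar> < \<eta>" "\<bar>b\<bar> < \<eta>" for f a b
  proof (rule smooth_expand[OF _ _ that(2,3)])
    show "smooth_on V f" using that(1) lam_smooth mu_smooth by auto
    fix x y assume "\<bar>x-r0p\<bar> < \<eta>" "\<bar>y-r0m\<bar> < \<eta>"
    then show "(x,y) \<in> V \<and> \<bar>pd1 (pd1 f) x y\<bar> \<le> M \<and> \<bar>pd2 (pd2 (pd1 f)) x y\<bar> \<le> M" using boxV boxM that(1) by blast
  qed
  have pathlim: "((\<lambda>\<tau>. rP (fst (\<pi> \<tau>)) (snd (\<pi> \<tau>))) \<longlongrightarrow> r0p) (at_right 0) \<and> ((\<lambda>\<tau>. rM (fst (\<pi> \<tau>)) (snd (\<pi> \<tau>))) \<longlongrightarrow> r0m) (at_right 0)"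
    if "filterlim \<pi> (at (x0,t0) within D) (at_right 0)" for \<pi> :: "real \<Rightarrow> real \<times> real"
    using filterlim_compose[OF r_lim(1) that] filterlim_compose[OF r_lim(2) that] by simp
  have comp: "((\<lambda>\<tau>. g (A \<tau>) (B \<tau>)) \<longlongrightarrow> g r0p r0m) F" if "smooth_on V g" "(A \<longlongrightarrow> r0p) F" "(B \<longlongrightarrow> r0m) F"
    for g A B and F :: "real filter"
  proof -
    have "isCont (\<lambda>q. g (fst q) (snd q)) (r0p, r0m)" using isc[OF that(1), of "[]"] by (simp add: r0_def)
    from isCont_tendsto_compose[OF this tendsto_Pair[OF that(2,3)]] show ?thesis by simp
  qed
  define \<nu> where "\<nu> = (\<lambda>\<tau>::real. (x0, t0 - \<tau>))"
  have \<nu>D: "eventually (\<lambda>\<tau>. \<nu> \<tau> \<in> D \<and> \<nu> \<tau> \<noteq> (x0,t0)) (at_right 0)"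
    unfolding eventually_at_right_field using delta_pos
    by (intro exI[of _ \<delta>]) (auto simp: \<nu>_def D_def dist_Pair_Pair dist_real_def)
  have \<nu>lim: "filterlim \<nu> (at (x0,t0) within D) (at_right 0)"
    unfolding filterlim_at
  proof
    show "eventually (\<lambda>\<tau>. \<nu> \<tau> \<in> D \<and> \<nu> \<tau> \<noteq> (x0,t0)) (at_right 0)" by (rule \<nu>D)
    have "((\<lambda>\<tau>. (x0, t0 - \<tau>)) \<longlongrightarrow> (x0, t0 - 0)) (at_right 0)" by (intro tendsto_intros)
    then show "(\<nu> \<longlongrightarrow> (x0,t0)) (at_right 0)" by (simp add: \<nu>_def)
  qed
  have hx: "x0 + lp0*t0 = mp r0p r0m \<and> x0 + lm0*t0 = mm r0p r0m"
  proof -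
    define A where "A = (\<lambda>\<tau>. rP (fst (\<nu> \<tau>)) (snd (\<nu> \<tau>)))"
    define B where "B = (\<lambda>\<tau>. rM (fst (\<nu> \<tau>)) (snd (\<nu> \<tau>)))"
    have A: "(A \<longlongrightarrow> r0p) (at_right 0)" and B: "(B \<longlongrightarrow> r0m) (at_right 0)" using pathlim[OF \<nu>lim] by (auto simp: A_def B_def)
    have t: "((\<lambda>\<tau>. t0 - \<tau>) \<longlongrightarrow> t0) (at_right 0)"
    proof -
      have "((\<lambda>\<tau>. t0 - \<tau>) \<longlongrightarrow> t0 - 0) (at_right 0)" by (intro tendsto_intros)
      then show ?thesis by simp
    qed
    have ev: "eventually (\<lambda>\<tau>. x0 + lp (A \<tau>) (B \<tau>) * (t0 - \<tau>) = mp (A \<tau>) (B \<tau>) \<and> x0 + lm (A \<tau>) (B \<tau>) * (t0 - \<tau>) = mm (A \<tau>) (B \<tau>)) (at_right 0)"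
      using \<nu>D by eventually_elim (use hod in \<open>auto simp: \<nu>_def A_def B_def\<close>)
    have L1: "((\<lambda>\<tau>. x0 + lp (A \<tau>) (B \<tau>) * (t0 - \<tau>)) \<longlongrightarrow> x0 + lp r0p r0m * t0) (at_right 0)"
      by (intro tendsto_intros comp[OF lam_smooth(1) A B] t)
    have L1': "((\<lambda>\<tau>. x0 + lm (A \<tau>) (B \<tau>) * (t0 - \<tau>)) \<longlongrightarrow> x0 + lm r0p r0m * t0) (at_right 0)"
      by (intro tendsto_intros comp[OF lam_smooth(2) A B] t)
    have L2: "((\<lambda>\<tau>. x0 + lp (A \<tau>) (B \<tau>) * (t0 - \<tau>)) \<longlongrightarrow> mp r0p r0m) (at_right 0)"
      by (rule Lim_transform_eventually[OF comp[OF mu_smooth(1) A B]]) (use ev in \<open>auto elim: eventually_mono\<close>)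
    have L2': "((\<lambda>\<tau>. x0 + lm (A \<tau>) (B \<tau>) * (t0 - \<tau>)) \<longlongrightarrow> mm r0p r0m) (at_right 0)"
      by (rule Lim_transform_eventually[OF comp[OF mu_smooth(2) A B]]) (use ev in \<open>auto elim: eventually_mono\<close>)
    show ?thesis using tendsto_unique[OF _ L1 L2] tendsto_unique[OF _ L1' L2'] by (simp add: lp0_def lm0_def)
  qed
  have V1: "mp r0p r0m - mm r0p r0m = t0*\<Delta>" using hx by (simp add: \<Delta>_def algebra_simps)
  have mu0: "pd2 mp r0p r0m = (mp r0p r0m - mm r0p r0m) / (lp r0p r0m - lm r0p r0m) * pd2 lp r0p r0m \<and>
        pd1 mm r0p r0m = (mp r0p r0m - mm r0p r0m) / (lp r0p r0m - lm r0p r0m) * pd1 lm r0p r0m"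
    using mu_eqs r0_in by auto
  have Q0: "(mp r0p r0m - mm r0p r0m) / (lp r0p r0m - lm r0p r0m) = t0"
    using V1 Dpos by (simp add: \<Delta>_def lp0_def lm0_def)
  have V2: "pd2 mp r0p r0m = t0 * pd2 lp r0p r0m" using mu0 Q0 by simp
  have V3: "pd1 mm r0p r0m = t0 * pd1 lm r0p r0m" using mu0 Q0 by simp
  have dlem: "A' = t0 * B'"
    if eqA: "\<And>y. \<bar>y - r0m\<bar> < \<eta> \<Longrightarrow> A y = (mp r0p y - mm r0p y)/(lp r0p y - lm r0p y) * Bf y"
    and dA: "(A has_real_derivative A') (at r0m)" and dB: "(Bf has_real_derivative B') (at r0m)"
    for A Bf A' B'
  proof -
    have dmp: "((\<lambda>y. mp r0p y) has_real_derivative pd2 mp r0p r0m) (at r0m)" using sm_d2[OF mu_smooth(1) r0_in, of "[]"] by simp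
    have dmm: "((\<lambda>y. mm r0p y) has_real_derivative pd2 mm r0p r0m) (at r0m)" using sm_d2[OF mu_smooth(2) r0_in, of "[]"] by simp
    have dlp: "((\<lambda>y. lp r0p y) has_real_derivative pd2 lp r0p r0m) (at r0m)" using sm_d2[OF lam_smooth(1) r0_in, of "[]"] by simp
    have dlm: "((\<lambda>y. lm r0p y) has_real_derivative pd2 lm r0p r0m) (at r0m)" using sm_d2[OF lam_smooth(2) r0_in, of "[]"] by simp
    have Dne: "lp r0p r0m - lm r0p r0m \<noteq> 0" using Dpos by (simp add: \<Delta>_def lp0_def lm0_def)
    have dQ: "((\<lambda>y. (mp r0p y - mm r0p y)/(lp r0p y - lm r0p y)) has_real_derivative
       ((pd2 mp r0p r0m - pd2 mm r0p r0m) * (lp r0p r0m - lm r0p r0m) - (mp r0p r0m - mm r0p r0m) * (pd2 lp r0p r0m - pd2 lm r0p r0m))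
         / ((lp r0p r0m - lm r0p r0m) * (lp r0p r0m - lm r0p r0m))) (at r0m)"
      by (rule DERIV_divide[OF DERIV_diff[OF dmp dmm] DERIV_diff[OF dlp dlm] Dne])
    have num0: "(pd2 mp r0p r0m - pd2 mm r0p r0m) * (lp r0p r0m - lm r0p r0m) - (mp r0p r0m - mm r0p r0m) * (pd2 lp r0p r0m - pd2 lm r0p r0m) = 0"
    proof -
      have e1: "pd2 mm r0p r0m = t0 * pd2 lm r0p r0m" using cat1 by simp
      have e2: "mp r0p r0m - mm r0p r0m = t0 * (lp r0p r0m - lm r0p r0m)" using V1 by (simp add: \<Delta>_def lp0_def lm0_def)
      show ?thesis unfolding e1 e2 V2 by (simp add: algebra_simps)
    qed
    have dQ0: "((\<lambda>y. (mp r0p y - mm r0p y)/(lp r0p y - lm r0p y)) has_real_derivative 0) (at r0m)"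
      using dQ num0 by simp
    have "((\<lambda>y. (mp r0p y - mm r0p y)/(lp r0p y - lm r0p y) * Bf y) has_real_derivative 0 * Bf r0m + B' * t0) (at r0m)"
      using DERIV_mult[OF dQ0 dB] Q0 by simp
    then have "((\<lambda>y. (mp r0p y - mm r0p y)/(lp r0p y - lm r0p y) * Bf y) has_real_derivative t0 * B') (at r0m)"
      by (simp add: mult.commute)
    then have "(A has_real_derivative t0 * B') (at r0m)"
      by (rule has_field_derivative_transform_within_open[where S="ball r0m \<eta>"]) (use \<eta> eqA in \<open>auto simp: dist_real_def abs_minus_commute\<close>)
    then show ?thesis using DERIV_unique dA by blast
  qed
  have V4: "pd2 (pd2 mp) r0p r0m = t0 * pd2 (pd2 lp) r0p r0m"
  proof (rule dlem[where A="\<lambda>y. pd2 mp r0p y" and Bf="\<lambda>y. pd2 lp r0p y"])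
    fix y assume "\<bar>y - r0m\<bar> < \<eta>"
    then have "(r0p, y) \<in> V" using boxV[of r0p y] \<eta> by simp
    then show "pd2 mp r0p y = (mp r0p y - mm r0p y)/(lp r0p y - lm r0p y) * pd2 lp r0p y" using mu_eqs by auto
  next
    show "((\<lambda>y. pd2 mp r0p y) has_real_derivative pd2 (pd2 mp) r0p r0m) (at r0m)" using sm_d2[OF mu_smooth(1) r0_in, of "[True]"] by simp
    show "((\<lambda>y. pd2 lp r0p y) has_real_derivative pd2 (pd2 lp) r0p r0m) (at r0m)" using sm_d2[OF lam_smooth(1) r0_in, of "[True]"] by simp
  qed
  have V5: "pd2 (pd1 mm) r0p r0m = t0 * pd2 (pd1 lm) r0p r0m"
  proof (rule dlem[where A="\<lambda>y. pd1 mm r0p y" and Bf="\<lambda>y. pd1 lm r0p y"])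
    fix y assume "\<bar>y - r0m\<bar> < \<eta>"
    then have "(r0p, y) \<in> V" using boxV[of r0p y] \<eta> by simp
    then show "pd1 mm r0p y = (mp r0p y - mm r0p y)/(lp r0p y - lm r0p y) * pd1 lm r0p y" using mu_eqs by auto
  next
    show "((\<lambda>y. pd1 mm r0p y) has_real_derivative pd2 (pd1 mm) r0p r0m) (at r0m)" using sm_d2[OF mu_smooth(2) r0_in, of "[False]"] by simp
    show "((\<lambda>y. pd1 lm r0p y) has_real_derivative pd2 (pd1 lm) r0p r0m) (at r0m)" using sm_d2[OF lam_smooth(2) r0_in, of "[False]"] by simp
  qed
  have cont3: "\<exists>d>0. \<forall>\<theta>. \<bar>\<theta>\<bar> < d \<longrightarrow> \<bar>pd2 (pd2 (pd2 f)) r0p (r0m+\<theta>) - pd2 (pd2 (pd2 f)) r0p r0m\<bar> < e"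
    if sm3: "smooth_on V f" and e3: "e > 0" for f e
  proof -
    have "isCont (\<lambda>q. pd2 (pd2 (pd2 f)) (fst q) (snd q)) r0" using isc[OF sm3, of "[True,True,True]"] by simp
    then obtain d where d: "d > 0" "\<And>q. dist q r0 < d \<Longrightarrow> dist (pd2 (pd2 (pd2 f)) (fst q) (snd q)) (pd2 (pd2 (pd2 f)) r0p r0m) < e"
      unfolding continuous_at_eps_delta using e3 by (auto simp: r0_def)
    show ?thesis
    proof (intro exI[of _ d] conjI allI impI d(1))
      fix \<theta> :: real assume "\<bar>\<theta>\<bar> < d"
      then have "dist (r0p, r0m+\<theta>) r0 < d" by (simp add: r0_def dist_Pair_Pair dist_real_def)
      from d(2)[OF this] show "\<bar>pd2 (pd2 (pd2 f)) r0p (r0m+\<theta>) - pd2 (pd2 (pd2 f)) r0p r0m\<bar> < e" by (simp add: dist_real_def)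
    qed
  qed

  define \<alpha> where "\<alpha> = pd1 mp r0p r0m - t0 * pd1 lp r0p r0m"
  define \<gamma> where "\<gamma> = - pd2 (pd2 (pd2 mm)) r0p r0m + t0 * pd2 (pd2 (pd2 lm)) r0p r0m"
  define c where "c = pd2 lm r0p r0m"
  have \<alpha>0: "\<alpha> \<noteq> 0" using gen2 by (simp add: \<alpha>_def)
  have \<gamma>0: "\<gamma> \<noteq> 0" using gen3 by (simp add: \<gamma>_def)
  define \<beta> where "\<beta> = - pd2 lm r0p r0m / (lp0 - lm0)"
  have main: "\<exists>RP RM. ((\<lambda>k. k powr (-2/3) * (rP (x_of lp0 lm0 x0 t0 (k powr (2/3) * Xp) (k * Xm)) (t_of lp0 lm0 t0 (k powr (2/3) * Xp) (k * Xm)) - r0p)) \<longlongrightarrow> RP) (at 0 within {k. 0 < k \<and> (k powr (2/3) * Xp - k * Xm) / (lp0 - lm0) < 0}) \<and> ((\<lambda>k. k powr (-1/3) * (rM (x_of lp0 lm0 x0 t0 (k powr (2/3) * Xp) (k * Xm)) (t_of lp0 lm0 t0 (k powr (2/3) * Xp) (k * Xm)) - r0m)) \<longlongrightarrow> RM) (at 0 within {k. 0 < k \<and> (k powr (2/3) * Xp - k * Xm) / (lp0 - lm0) < 0}) \<and> Xp = \<alpha> * RP \<and> Xm = \<beta> * Xp * RM - \<gamma> * RM ^ 3 / 6"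
    if XX: "\<bar>Xp\<bar> < 1 \<and> \<bar>Xm\<bar> < 1 \<and> (Xp - Xm) / (lp0 - lm0) < 0" for Xp Xm :: real
  proof -
    have XpXm: "Xp < Xm" using XX Dpos by (simp add: \<Delta>_def divide_less_0_iff)
    define SS where "SS = {k. 0 < k \<and> (k powr (2/3) * Xp - k * Xm) / (lp0 - lm0) < 0}"
    have SS0: "SS \<subseteq> {0<..}" by (auto simp: SS_def)
    have goal: "\<exists>RP RM.
             ((\<lambda>k. k powr (-2/3) *
                 (rP (x_of lp0 lm0 x0 t0 (k powr (2/3) * Xp) (k * Xm))
                     (t_of lp0 lm0 t0 (k powr (2/3) * Xp) (k * Xm)) - r0p)) \<longlongrightarrow> RP) (at 0 within SS) \<and>
             ((\<lambda>k. k powr (-1/3) *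
                 (rM (x_of lp0 lm0 x0 t0 (k powr (2/3) * Xp) (k * Xm))
                     (t_of lp0 lm0 t0 (k powr (2/3) * Xp) (k * Xm)) - r0m)) \<longlongrightarrow> RM) (at 0 within SS) \<and>
             Xp = \<alpha> * RP \<and>
             Xm = \<beta> * Xp * RM - \<gamma> * RM ^ 3 / 6"
    proof (cases "Xp \<le> 0")
      case False
      then have Xp: "Xp > 0" by simp
      have bot: "at 0 within SS = bot"
      proof -
        define cc where "cc = Xp/(\<bar>Xm\<bar>+1)"
        have cc: "cc > 0" using Xp by (simp add: cc_def)
        have "eventually (\<lambda>k. False) (at 0 within SS)"
          unfolding eventually_at
        proof (intro exI[of _ "cc^3"] conjI ballI impI)
          show "cc^3 > 0" using cc by simp
          fix k assume k: "k \<in> SS" "k \<noteq> 0 \<and> dist k 0 < cc^3"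
          then have k0: "k > 0" and kS: "(k powr (2/3) * Xp - k * Xm) / (lp0 - lm0) < 0" by (auto simp: SS_def)
          define \<tau> where "\<tau> = k powr (1/3)"
          have \<tau>0: "\<tau> > 0" using k0 by (simp add: \<tau>_def)
          have t2: "k powr (2/3) = \<tau>^2" and t3: "k = \<tau>^3" using powr_third[OF k0] by (simp_all add: \<tau>_def)
          have h: "k powr (2/3) * Xp - k * Xm < 0" using kS Dpos by (simp add: \<Delta>_def divide_less_0_iff)
          have "\<tau>^2*Xp - \<tau>^3*Xm < 0" using h unfolding t2 by (subst (asm) t3) simp
          then have "\<tau>^2*(Xp - \<tau>*Xm) < 0" by (simp add: algebra_simps power_numeral_reduce)
          then have lt: "Xp < \<tau>*Xm" using \<tau>0 by (simp add: mult_less_0_iff)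
          have "k < cc^3" using k k0 by (simp add: dist_real_def)
          have "\<tau> < cc"
          proof (rule ccontr)
            assume "\<not> \<tau> < cc"
            then have "cc^3 \<le> \<tau>^3" using cc by (intro power_mono) auto
            then show False using \<open>k < cc^3\<close> t3 by simp
          qed
          then have "\<tau>*\<bar>Xm\<bar> \<le> cc*\<bar>Xm\<bar>" by (intro mult_right_mono) auto
          also have "cc*\<bar>Xm\<bar> = Xp*(\<bar>Xm\<bar>/(\<bar>Xm\<bar>+1))" by (simp add: cc_def)
          also have "\<dots> \<le> Xp*1" using Xp by (intro mult_left_mono) auto
          finally have "\<tau>*\<bar>Xm\<bar> \<le> Xp" by simp
          moreover have "\<tau>*Xm \<le> \<tau>*\<bar>Xm\<bar>" using \<tau>0 by (intro mult_left_mono) auto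
          ultimately show False using lt by linarith
        qed
        then show ?thesis by (simp add: eventually_False)
      qed
      obtain RM where RM: "Xm = (\<beta>*Xp)*RM - \<gamma>*RM^3/6" using cubic_root[OF \<gamma>0] by blast
      show ?thesis using RM \<alpha>0 by (intro exI[of _ "Xp/\<alpha>"] exI[of _ RM]) (simp add: bot)
    next
      case True
      define \<tau>1 where "\<tau>1 = (if Xp < 0 then -Xp/(\<bar>Xm\<bar>+1) else 1)"
      have \<tau>1: "\<tau>1 > 0"
      proof (cases "Xp < 0")
        case True
        have "\<bar>Xm\<bar>+1 > 0" by simp
        then show ?thesis using True by (simp add: \<tau>1_def divide_neg_pos)
      qed (simp add: \<tau>1_def)
      have neg: "Xp - \<tau>*Xm < 0" if "0 < \<tau>" "\<tau> < \<tau>1" for \<tau>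
      proof (cases "Xp < 0")
        case True
        have "-(\<tau>*Xm) \<le> \<bar>\<tau>*Xm\<bar>" by (rule abs_ge_minus_self)
        also have "\<bar>\<tau>*Xm\<bar> = \<tau>*\<bar>Xm\<bar>" using that by (simp add: abs_mult)
        also have "\<tau>*\<bar>Xm\<bar> \<le> \<tau>1*\<bar>Xm\<bar>" using that by (intro mult_right_mono) auto
        also have "\<tau>1*\<bar>Xm\<bar> = (-Xp)*(\<bar>Xm\<bar>/(\<bar>Xm\<bar>+1))" using True by (simp add: \<tau>1_def)
        also have "\<dots> < (-Xp)*1" using True by (intro mult_strict_left_mono) auto
        finally show ?thesis by simp
      next
        case False
        then have "Xp = 0" using \<open>Xp \<le> 0\<close> by simp
        then have "Xm > 0" using XpXm by simp
        then show ?thesis using \<open>Xp = 0\<close> that by simp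
      qed
      define \<sigma> where "\<sigma> = (\<lambda>\<tau>::real. (Xp - \<tau>*Xm)/\<Delta>)"
      define xx where "xx = (\<lambda>\<tau>. x_of lp0 lm0 x0 t0 (\<tau>^2*Xp) (\<tau>^3*Xm))"
      define tt where "tt = (\<lambda>\<tau>. t_of lp0 lm0 t0 (\<tau>^2*Xp) (\<tau>^3*Xm))"
      have tt_eq: "tt \<tau> = t0 + \<tau>^2*\<sigma> \<tau>" for \<tau>
        using Dpos by (simp add: tt_def t_of_def \<sigma>_def \<Delta>_def field_simps power2_eq_square power3_eq_cube)
      have xx_eq: "xx \<tau> = x0 + \<tau>^2*Xp - lp0*(\<tau>^2*\<sigma> \<tau>)" for \<tau>
        using tt_eq[of \<tau>] by (simp add: xx_def x_of_def tt_def)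
      have xx_eq2: "xx \<tau> = x0 + \<tau>^3*Xm - lm0*(\<tau>^2*\<sigma> \<tau>)" for \<tau>
        using Dpos unfolding xx_eq by (simp add: \<sigma>_def \<Delta>_def field_simps power2_eq_square power3_eq_cube)
      define \<pi> where "\<pi> = (\<lambda>\<tau>. (xx \<tau>, tt \<tau>))"
      have \<pi>_eq: "\<pi> = (\<lambda>\<tau>. (x0 + \<tau>^2*Xp - lp0*(\<tau>^2*((Xp - \<tau>*Xm)/\<Delta>)), t0 + \<tau>^2*((Xp - \<tau>*Xm)/\<Delta>)))"
        by (rule ext) (simp add: \<pi>_def xx_eq tt_eq \<sigma>_def)
      have \<pi>cont: "continuous_on UNIV \<pi>" unfolding \<pi>_eq using Dpos by (intro continuous_intros) auto
      have \<pi>t: "(\<pi> \<longlongrightarrow> (x0,t0)) (at_right 0)"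
      proof -
        have "((\<lambda>\<tau>. (x0 + \<tau>^2*Xp - lp0*(\<tau>^2*((Xp - \<tau>*Xm)/\<Delta>)), t0 + \<tau>^2*((Xp - \<tau>*Xm)/\<Delta>))) \<longlongrightarrow>
           (x0 + 0^2*Xp - lp0*(0^2*((Xp - 0*Xm)/\<Delta>)), t0 + 0^2*((Xp - 0*Xm)/\<Delta>))) (at_right 0)"
          using Dpos by (intro tendsto_intros) auto
        then show ?thesis unfolding \<pi>_eq by simp
      qed
      have evD: "eventually (\<lambda>\<tau>. \<pi> \<tau> \<in> D \<and> \<pi> \<tau> \<noteq> (x0,t0)) (at_right 0)"
      proof -
        have "eventually (\<lambda>\<tau>. dist (\<pi> \<tau>) (x0,t0) < \<delta>) (at_right 0)" using tendstoD[OF \<pi>t delta_pos] .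
        moreover have "eventually (\<lambda>\<tau>. 0 < \<tau> \<and> \<tau> < \<tau>1) (at_right 0)" using ev_tau[OF \<tau>1] .
        ultimately show ?thesis
        proof eventually_elim
          case (elim \<tau>)
          have "\<sigma> \<tau> < 0" using neg[of \<tau>] elim Dpos by (simp add: \<sigma>_def divide_neg_pos)
          then have "\<tau>^2*\<sigma> \<tau> < 0" using elim by (simp add: mult_pos_neg)
          then have "tt \<tau> < t0" by (simp add: tt_eq)
          then show ?case using elim by (auto simp: D_def \<pi>_def)
        qed
      qed
      have \<pi>lim: "filterlim \<pi> (at (x0,t0) within D) (at_right 0)"
        unfolding filterlim_at using evD \<pi>t by blast
      obtain T where T: "T > 0" "\<And>\<tau>. 0 < \<tau> \<Longrightarrow> \<tau> < T \<Longrightarrow> \<pi> \<tau> \<in> D"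
        using evD unfolding eventually_at_right_field by auto
      define a where "a = (\<lambda>\<tau>. rP (xx \<tau>) (tt \<tau>) - r0p)"
      define b where "b = (\<lambda>\<tau>. rM (xx \<tau>) (tt \<tau>) - r0m)"
      have a0: "(a \<longlongrightarrow> 0) (at_right 0)" and b0: "(b \<longlongrightarrow> 0) (at_right 0)"
        using pathlim[OF \<pi>lim] by (simp_all add: a_def b_def \<pi>_def LIM_zero_iff)
      define S where "S = (\<bar>Xp\<bar> + \<bar>Xm\<bar>)/\<Delta>"
      have S0: "S \<ge> 0" using Dpos by (simp add: S_def)
      have Hs: "eventually (\<lambda>\<tau>. \<bar>\<sigma> \<tau>\<bar> \<le> S) (at_right 0)"
        using ev_tau[OF zero_less_one]
      proof eventually_elim
        case (elim \<tau>)
        have "\<bar>\<tau>*Xm\<bar> = \<bar>\<tau>\<bar>*\<bar>Xm\<bar>" by (simp add: abs_mult)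
        also have "\<dots> \<le> 1*\<bar>Xm\<bar>" using elim by (intro mult_right_mono) auto
        finally have "\<bar>\<tau>*Xm\<bar> \<le> 1*\<bar>Xm\<bar>" .
        then have "\<bar>Xp - \<tau>*Xm\<bar> \<le> \<bar>Xp\<bar> + \<bar>Xm\<bar>" by linarith
        then show ?case using Dpos by (simp add: \<sigma>_def S_def abs_divide divide_right_mono)
      qed
      define \<eta>1 where "\<eta>1 = min \<eta> 1"
      have \<eta>1: "\<eta>1 > 0" "\<eta>1 \<le> \<eta>" "\<eta>1 \<le> 1" using \<eta> by (auto simp: \<eta>1_def)
      have evbase: "eventually (\<lambda>\<tau>. \<pi> \<tau> \<in> D \<and> \<bar>a \<tau>\<bar> < \<eta>1 \<and> \<bar>b \<tau>\<bar> < \<eta>1 \<and> \<bar>\<sigma> \<tau>\<bar> \<le> S \<and> 0 < \<tau>) (at_right 0)"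
        using evD ev_small[OF a0 \<eta>1(1)] ev_small[OF b0 \<eta>1(1)] Hs ev_tau[OF zero_less_one] by eventually_elim auto
      have ident: "\<tau>^2*Xp = (mp (r0p + a \<tau>) (r0m + b \<tau>) - mp r0p r0m) - t0*(lp (r0p + a \<tau>) (r0m + b \<tau>) - lp r0p r0m) - (lp (r0p + a \<tau>) (r0m + b \<tau>) - lp r0p r0m)*(\<tau>^2*\<sigma> \<tau>)
          \<and> \<tau>^3*Xm = (mm (r0p + a \<tau>) (r0m + b \<tau>) - mm r0p r0m) - t0*(lm (r0p + a \<tau>) (r0m + b \<tau>) - lm r0p r0m) - (lm (r0p + a \<tau>) (r0m + b \<tau>) - lm r0p r0m)*(\<tau>^2*\<sigma> \<tau>)"
        if "\<pi> \<tau> \<in> D" for \<tau>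
      proof -
        have ra: "r0p + a \<tau> = rP (xx \<tau>) (tt \<tau>)" "r0m + b \<tau> = rM (xx \<tau>) (tt \<tau>)" by (simp_all add: a_def b_def)
        have h: "xx \<tau> + lp (rP (xx \<tau>) (tt \<tau>)) (rM (xx \<tau>) (tt \<tau>)) * tt \<tau> = mp (rP (xx \<tau>) (tt \<tau>)) (rM (xx \<tau>) (tt \<tau>))"
           "xx \<tau> + lm (rP (xx \<tau>) (tt \<tau>)) (rM (xx \<tau>) (tt \<tau>)) * tt \<tau> = mm (rP (xx \<tau>) (tt \<tau>)) (rM (xx \<tau>) (tt \<tau>))"
          using hod[of "xx \<tau>" "tt \<tau>"] that by (auto simp: \<pi>_def)
        have h0: "x0 + lp r0p r0m * t0 = mp r0p r0m" "x0 + lm r0p r0m * t0 = mm r0p r0m" using hx by (simp_all add: lp0_def lm0_def)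
        show ?thesis unfolding ra
          using ident_alg[OF h(1) h0(1) tt_eq xx_eq[unfolded lp0_def]] ident_alg[OF h(2) h0(2) tt_eq xx_eq2[unfolded lm0_def]] by simp
      qed
      have bnd3: "\<bar>pd2 (pd2 (pd2 f)) r0p (r0m+\<theta>)\<bar> \<le> M" if "f \<in> {mp, mm, lp, lm}" "\<bar>\<theta>\<bar> \<le> \<bar>bb\<bar>" "\<bar>bb\<bar> < \<eta>" for f \<theta> bb
        using boxM[OF that(1), of r0p "r0m+\<theta>"] that \<eta> by auto
      define Kp where "Kp = \<bar>pd2 (pd1 mp) r0p r0m\<bar> + \<bar>t0\<bar>*\<bar>pd2 (pd1 lp) r0p r0m\<bar> + M + \<bar>t0\<bar>*M + (\<bar>pd1 lp r0p r0m\<bar>+\<bar>pd2 (pd1 lp) r0p r0m\<bar>+\<bar>pd2 lp r0p r0m\<bar>+\<bar>pd2 (pd2 lp) r0p r0m\<bar>+3*M)*S"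
      have Kp0: "Kp \<ge> 0" using M0 S0 by (simp add: Kp_def)
      have Hp: "eventually (\<lambda>\<tau>. \<bar>\<tau>^2*Xp - \<alpha>*a \<tau>\<bar> \<le> Kp*(\<bar>a \<tau>\<bar>*\<bar>b \<tau>\<bar> + \<bar>b \<tau>\<bar>^3 + (a \<tau>)^2 + \<bar>a \<tau>\<bar>*(b \<tau>)^2 + \<tau>^2*(\<bar>a \<tau>\<bar>+\<bar>b \<tau>\<bar>))) (at_right 0)"
        using evbase
      proof eventually_elim
        case (elim \<tau>)
        have ab: "\<bar>a \<tau>\<bar> < \<eta>" "\<bar>b \<tau>\<bar> < \<eta>" "\<bar>a \<tau>\<bar> \<le> 1" "\<bar>b \<tau>\<bar> \<le> 1" using elim \<eta>1 by auto
        show ?case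
        proof (rule comb_plus_ex[where \<sigma>="\<sigma> \<tau>" and \<tau>=\<tau>, OF expand[of mp "a \<tau>" "b \<tau>"] expand[of lp "a \<tau>" "b \<tau>"]])
          show "\<bar>pd2 (pd2 (pd2 mp)) r0p (r0m + \<theta>)\<bar> \<le> M" if "\<bar>\<theta>\<bar> \<le> \<bar>b \<tau>\<bar>" for \<theta> using bnd3[of mp \<theta> "b \<tau>"] that ab by simp
          show "\<bar>pd2 (pd2 (pd2 lp)) r0p (r0m + \<theta>)\<bar> \<le> M" if "\<bar>\<theta>\<bar> \<le> \<bar>b \<tau>\<bar>" for \<theta> using bnd3[of lp \<theta> "b \<tau>"] that ab by simp
        qed (use ab elim V2 V4 ident[of \<tau>] in \<open>simp_all add: \<alpha>_def Kp_def\<close>)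
      qed
      define Km where "Km = (1+\<bar>t0\<bar>)*M + (\<bar>pd1 lm r0p r0m\<bar>+\<bar>pd2 (pd1 lm) r0p r0m\<bar>+\<bar>pd2 (pd2 lm) r0p r0m\<bar>+3*M)*S"
      have Km0: "Km \<ge> 0" using M0 S0 by (simp add: Km_def)
      have Hm: "eventually (\<lambda>\<tau>. \<bar>\<tau>^3*Xm - (-\<gamma>/6*(b \<tau>)^3 - c*b \<tau>*\<tau>^2*\<sigma> \<tau>)\<bar> \<le> \<epsilon>*\<bar>b \<tau>\<bar>^3 + Km*((a \<tau>)^2 + \<bar>a \<tau>\<bar>*(b \<tau>)^2 + \<tau>^2*(\<bar>a \<tau>\<bar> + (b \<tau>)^2))) (at_right 0)"
        if \<epsilon>: "\<epsilon> > 0" for \<epsilon>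
      proof -
        obtain d1 where d1: "d1 > 0" "\<And>\<theta>. \<bar>\<theta>\<bar> < d1 \<Longrightarrow> \<bar>pd2 (pd2 (pd2 mm)) r0p (r0m+\<theta>) - pd2 (pd2 (pd2 mm)) r0p r0m\<bar> < 3*\<epsilon>"
          using cont3[OF mu_smooth(2), of "3*\<epsilon>"] \<epsilon> by auto
        have e2: "3*\<epsilon>/(\<bar>t0\<bar>+1) > 0" using \<epsilon> by simp
        obtain d2 where d2: "d2 > 0" "\<And>\<theta>. \<bar>\<theta>\<bar> < d2 \<Longrightarrow> \<bar>pd2 (pd2 (pd2 lm)) r0p (r0m+\<theta>) - pd2 (pd2 (pd2 lm)) r0p r0m\<bar> < 3*\<epsilon>/(\<bar>t0\<bar>+1)"
          using cont3[OF lam_smooth(2) e2] by auto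
        have g6: "\<bar>pd2 (pd2 (pd2 mm)) r0p (r0m+\<theta>1) - t0 * pd2 (pd2 (pd2 lm)) r0p (r0m+\<theta>2) + \<gamma>\<bar> \<le> 6*\<epsilon>"
          if "\<bar>\<theta>1\<bar> < d1" "\<bar>\<theta>2\<bar> < d2" for \<theta>1 \<theta>2
        proof -
          define A where "A = pd2 (pd2 (pd2 mm)) r0p (r0m+\<theta>1) - pd2 (pd2 (pd2 mm)) r0p r0m"
          define B where "B = pd2 (pd2 (pd2 lm)) r0p (r0m+\<theta>2) - pd2 (pd2 (pd2 lm)) r0p r0m"
          have A: "\<bar>A\<bar> < 3*\<epsilon>" using d1(2)[OF that(1)] by (simp add: A_def)
          have B: "\<bar>B\<bar> < 3*\<epsilon>/(\<bar>t0\<bar>+1)" using d2(2)[OF that(2)] by (simp add: B_def)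
          have "\<bar>t0\<bar>*\<bar>B\<bar> \<le> (\<bar>t0\<bar>+1)*\<bar>B\<bar>" by (intro mult_right_mono) auto
          also have "\<dots> \<le> (\<bar>t0\<bar>+1)*(3*\<epsilon>/(\<bar>t0\<bar>+1))" using B by (intro mult_left_mono) auto
          also have "\<dots> = 3*\<epsilon>" by simp
          finally have tB: "\<bar>t0*B\<bar> \<le> 3*\<epsilon>" by (simp add: abs_mult)
          have "pd2 (pd2 (pd2 mm)) r0p (r0m+\<theta>1) - t0 * pd2 (pd2 (pd2 lm)) r0p (r0m+\<theta>2) + \<gamma> = A - t0*B"
            by (simp add: A_def B_def \<gamma>_def algebra_simps)
          then show ?thesis using A tB by (simp add: abs_triangle_ineq4[of A "t0*B", THEN order_trans])
        qed
        have dd: "min d1 d2 > 0" using d1 d2 by simp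
        show ?thesis using evbase ev_small[OF b0 dd]
        proof eventually_elim
          case (elim \<tau>)
          have ab: "\<bar>a \<tau>\<bar> < \<eta>" "\<bar>b \<tau>\<bar> < \<eta>" "\<bar>a \<tau>\<bar> \<le> 1" "\<bar>b \<tau>\<bar> \<le> 1" using elim \<eta>1 by auto
          show ?case unfolding c_def
          proof (rule comb_minus_ex[where \<sigma>="\<sigma> \<tau>" and \<tau>=\<tau> and S=S, OF expand[of mm "a \<tau>" "b \<tau>"] expand[of lm "a \<tau>" "b \<tau>"]])
            show "\<bar>pd2 (pd2 (pd2 lm)) r0p (r0m + \<theta>)\<bar> \<le> M" if "\<bar>\<theta>\<bar> \<le> \<bar>b \<tau>\<bar>" for \<theta> using bnd3[of lm \<theta> "b \<tau>"] that ab by simp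
            show "\<bar>pd2 (pd2 (pd2 mm)) r0p (r0m + \<theta>1) - t0 * pd2 (pd2 (pd2 lm)) r0p (r0m + \<theta>2) + \<gamma>\<bar> \<le> 6*\<epsilon>"
              if "\<bar>\<theta>1\<bar> \<le> \<bar>b \<tau>\<bar>" "\<bar>\<theta>2\<bar> \<le> \<bar>b \<tau>\<bar>" for \<theta>1 \<theta>2
              using g6 that elim by simp
          qed (use ab elim V3 V5 cat1 cat2 ident[of \<tau>] in \<open>simp_all add: c_def Km_def\<close>)
        qed
      qed
      from stepA[OF \<alpha>0 Kp0 a0 b0 Hp] obtain C where C: "C \<ge> 0" "eventually (\<lambda>\<tau>. \<bar>a \<tau>\<bar> \<le> C*(\<tau>^2 + \<bar>b \<tau>\<bar>^3)) (at_right 0)" by blast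
      from stepB[OF \<gamma>0 Km0 C(1) S0 b0 C(2) Hm Hs] obtain N where N: "N \<ge> 1" "eventually (\<lambda>\<tau>. \<bar>b \<tau>\<bar> \<le> N*\<tau>) (at_right 0)" by blast
      have HA: "eventually (\<lambda>\<tau>. \<bar>a \<tau>\<bar> \<le> (C*(1+N^3))*\<tau>^2) (at_right 0)" by (rule stepC[OF C(1) N(1) C(2) N(2)])
      have Ca0: "C*(1+N^3) \<ge> 0" using C N by simp
      have limA: "((\<lambda>\<tau>. a \<tau>/\<tau>^2) \<longlongrightarrow> Xp/\<alpha>) (at_right 0)" by (rule stepD[OF \<alpha>0 Kp0 Ca0 N(1) HA N(2) Hp])
      have \<sigma>lim: "(\<sigma> \<longlongrightarrow> Xp/\<Delta>) (at_right 0)"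
      proof -
        have "((\<lambda>\<tau>. (Xp - \<tau>*Xm)/\<Delta>) \<longlongrightarrow> (Xp - 0*Xm)/\<Delta>) (at_right 0)" using Dpos by (intro tendsto_intros) auto
        then show ?thesis by (simp add: \<sigma>_def)
      qed
      have limP: "((\<lambda>\<tau>. -\<gamma>/6*(b \<tau>/\<tau>)^3 - c*(Xp/\<Delta>)*(b \<tau>/\<tau>)) \<longlongrightarrow> Xm) (at_right 0)"
        by (rule stepE[OF Km0 Ca0 N(1) HA N(2) Hm \<sigma>lim])
      have rMc: "continuous_on D (\<lambda>p. rM (fst p) (snd p))"
      proof -
        have c1: "continuous_on D (\<lambda>p. (u (fst p) (snd p), v (fst p) (snd p)))"
          using sm_cont_on[OF uv_smooth(1)] sm_cont_on[OF uv_smooth(2)] by (intro continuous_on_Pair)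
        have "(\<lambda>p. (u (fst p) (snd p), v (fst p) (snd p))) ` D \<subseteq> U" using uvU by force
        from continuous_on_compose2[OF sm_cont_on[OF R_smooth(2)] c1 this]
        have "continuous_on D (\<lambda>p. Rm (u (fst p) (snd p)) (v (fst p) (snd p)))" by simp
        then show ?thesis by (rule continuous_on_eq) (use rdef in force)
      qed
      have contb: "continuous_on {0<..<T} (\<lambda>\<tau>. b \<tau>/\<tau>)"
      proof -
        have "\<pi> ` {0<..<T} \<subseteq> D" using T by auto
        from continuous_on_compose2[OF rMc continuous_on_subset[OF \<pi>cont subset_UNIV] this]
        have "continuous_on {0<..<T} (\<lambda>\<tau>. rM (xx \<tau>) (tt \<tau>))" by (simp add: \<pi>_def)
        then have "continuous_on {0<..<T} (\<lambda>\<tau>. (rM (xx \<tau>) (tt \<tau>) - r0m)/\<tau>)" by (intro continuous_intros) auto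
        then show ?thesis by (simp add: b_def)
      qed
      define kk where "kk = -\<gamma>/6"
      define ll where "ll = - c*(Xp/\<Delta>)"
      have finZ: "finite {y. kk*y^3 + ll*y = Xm}"
      proof -
        have eq: "{y. kk*y^3 + ll*y = Xm} = {y. poly [:-Xm, ll, 0, kk:] y = 0}"
          by (auto simp: algebra_simps power3_eq_cube)
        have "[:-Xm, ll, 0, kk:] \<noteq> 0" using \<gamma>0 by (simp add: kk_def)
        then show ?thesis unfolding eq by (rule poly_roots_finite)
      qed
      have bnd\<rho>: "eventually (\<lambda>\<tau>. \<bar>b \<tau>/\<tau>\<bar> \<le> N) (at_right 0)"
        using N(2) ev_tau[OF zero_less_one] by eventually_elim (simp add: abs_divide field_simps)
      have limP': "((\<lambda>\<tau>. kk*(b \<tau>/\<tau>)^3 + ll*(b \<tau>/\<tau>)) \<longlongrightarrow> Xm) (at_right 0)"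
        using limP by (simp add: kk_def ll_def)
      have contP: "continuous_on UNIV (\<lambda>y. kk*y^3 + ll*y)" by (intro continuous_intros)
      from conv_root[where P="\<lambda>y. kk*y^3 + ll*y" and \<rho>="\<lambda>\<tau>. b \<tau>/\<tau>", OF contP finZ contb T(1) bnd\<rho> limP']
      obtain R where R: "((\<lambda>\<tau>. b \<tau>/\<tau>) \<longlongrightarrow> R) (at_right 0)" "kk*R^3 + ll*R = Xm" by blast
      show ?thesis
      proof (rule exI[of _ "Xp/\<alpha>"], rule exI[of _ R], intro conjI)
        show "((\<lambda>k. k powr (-2/3) * (rP (x_of lp0 lm0 x0 t0 (k powr (2/3) * Xp) (k * Xm))
                     (t_of lp0 lm0 t0 (k powr (2/3) * Xp) (k * Xm)) - r0p)) \<longlongrightarrow> Xp/\<alpha>) (at 0 within SS)"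
        proof (rule klim[OF limA SS0])
          fix k :: real assume k: "k > 0"
          show "k powr (-2/3) * (rP (x_of lp0 lm0 x0 t0 (k powr (2/3) * Xp) (k * Xm))
                     (t_of lp0 lm0 t0 (k powr (2/3) * Xp) (k * Xm)) - r0p) = a (k powr (1/3)) / (k powr (1/3))^2"
            using powr_third[OF k] by (simp add: a_def xx_def tt_def)
        qed
        show "((\<lambda>k. k powr (-1/3) * (rM (x_of lp0 lm0 x0 t0 (k powr (2/3) * Xp) (k * Xm))
                     (t_of lp0 lm0 t0 (k powr (2/3) * Xp) (k * Xm)) - r0m)) \<longlongrightarrow> R) (at 0 within SS)"
        proof (rule klim[OF R(1) SS0])
          fix k :: real assume k: "k > 0"
          show "k powr (-1/3) * (rM (x_of lp0 lm0 x0 t0 (k powr (2/3) * Xp) (k * Xm))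
                     (t_of lp0 lm0 t0 (k powr (2/3) * Xp) (k * Xm)) - r0m) = b (k powr (1/3)) / (k powr (1/3))"
            using powr_third[OF k] by (simp add: b_def xx_def tt_def)
        qed
        show "Xp = \<alpha> * (Xp/\<alpha>)" using \<alpha>0 by simp
        show "Xm = \<beta> * Xp * R - \<gamma> * R ^ 3 / 6"
          using R(2) Dpos by (simp add: \<beta>_def kk_def ll_def c_def \<Delta>_def field_simps)
      qed

    qed
    then show ?thesis unfolding SS_def .
  qed
  show ?thesis
    unfolding Let_def
  proof (rule exI[of _ "1::real"], intro conjI zero_less_one allI impI)
    fix Xp Xm :: real
    assume "\<bar>Xp\<bar> < 1 \<and> \<bar>Xm\<bar> < 1 \<and> (Xp - Xm) / (lp r0p r0m - lm r0p r0m) < 0"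
    then have "\<bar>Xp\<bar> < 1 \<and> \<bar>Xm\<bar> < 1 \<and> (Xp - Xm) / (lp0 - lm0) < 0" by (simp only: lp0_def lm0_def)
    from main[OF this] show "\<exists>RP RM. ((\<lambda>k. k powr (-2/3) * (rP (x_of (lp r0p r0m) (lm r0p r0m) x0 t0 (k powr (2/3) * Xp) (k * Xm)) (t_of (lp r0p r0m) (lm r0p r0m) t0 (k powr (2/3) * Xp) (k * Xm)) - r0p)) \<longlongrightarrow> RP) (at 0 within {k. 0 < k \<and> (k powr (2/3) * Xp - k * Xm) / (lp r0p r0m - lm r0p r0m) < 0}) \<and> ((\<lambda>k. k powr (-1/3) * (rM (x_of (lp r0p r0m) (lm r0p r0m) x0 t0 (k powr (2/3) * Xp) (k * Xm)) (t_of (lp r0p r0m) (lm r0p r0m) t0 (k powr (2/3) * Xp) (k * Xm)) - r0m)) \<longlongrightarrow> RM) (at 0 within {k. 0 < k \<and> (k powr (2/3) * Xp - k * Xm) / (lp r0p r0m - lm r0p r0m) < 0}) \<and> Xp = (pd1 mp r0p r0m - t0 * pd1 lp r0p r0m) * RP \<and> Xm = - pd2 lm r0p r0m / (lp r0p r0m - lm r0p r0m) * Xp * RM - (- pd2 (pd2 (pd2 mm)) r0p r0m + t0 * pd2 (pd2 (pd2 lm)) r0p r0m) * RM ^ 3 / 6"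
      by (simp only: lp0_def lm0_def \<alpha>_def \<beta>_def \<gamma>_def)
  qed
qed


end
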